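(* For every $i\in\{0,2\}$, every $j\in\{0,1,2,3,4\}$ and every $n\ge0$: \[ a^j_{5,i}(5n+4)=\tfrac15 a_{5,i}(5n+4),\qquad a^0_{5,i}(5n+4)=a_{5,i}(n),\qquad a_{5,i}(5n+4)=5\,a_{5,i}(n). \]
   Context: For a partition $\pi$, $\pi'$ is its conjugate, $\mathcal O(\pi)$ the number of odd parts, and $\mathrm{srank}(\pi)=\mathcal O(\pi)-\mathcal O(\pi')$. A 5-core is a partition with no rim hook of length $5$. The cell in row $a$, column $b$ of a Young diagram is labelled by $b-a\bmod5$; for a 5-core with $r_i$ cells labelled $i$, its $n$-vector is $(n_0,\dots,n_4)=(r_0-r_1,r_1-r_2,r_2-r_3,r_3-r_4,r_4-r_0)$. For a 5-core $\kappa$ with $|\kappa|\equiv4\pmod5$, its 5-core crank is defined modulo $5$ by $c_5(\kappa)\equiv2(1+n_0-n_1-n_2+n_3)\pmod5$. $a_{5,i}(n)$ is the number of 5-cores of $n$ with $\mathrm{srank}\equiv i\pmod4$, and $a^j_{5,i}(n)$ is the number of those that moreover have $c_5\equiv j\pmod5$ (for $n\equiv4\pmod5$). *)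

theory Defs
  imports Complex_Main
begin

definition is_partition :: "nat list \<Rightarrow> bool" where
  "is_partition la \<longleftrightarrow> sorted (rev la) \<and> 0 \<notin> set la"

text \<open>Young diagram, cells (row, column), 0-indexed (labels b - a are unaffected).\<close>
definition diagram :: "nat list \<Rightarrow> (nat \<times> nat) set" where
  "diagram la = {(a, b). a < length la \<and> b < la ! a}"

definition conjugate :: "nat list \<Rightarrow> nat list" where
  "conjugate la = map (\<lambda>k. length (filter (\<lambda>x. k < x) la)) [0..<(if la = [] then 0 else hd la)]"

definition num_odd :: "nat list \<Rightarrow> nat" where
  "num_odd la = length (filter odd la)"

definition srank :: "nat list \<Rightarrow> int" where
  "srank la = int (num_odd la) - int (num_odd (conjugate la))"

definition cell_adj :: "nat \<times> nat \<Rightarrow> nat \<times> nat \<Rightarrow> bool" where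
  "cell_adj p q \<longleftrightarrow> \<bar>int (fst p) - int (fst q)\<bar> + \<bar>int (snd p) - int (snd q)\<bar> = 1"

definition rim_hook :: "nat list \<Rightarrow> nat list \<Rightarrow> nat \<Rightarrow> bool" where
  "rim_hook la mu k \<longleftrightarrow>
     is_partition mu \<and> diagram mu \<subseteq> diagram la \<and>
     (let S = diagram la - diagram mu in
        card S = k \<and>
        (\<forall>x\<in>S. \<forall>y\<in>S. (\<lambda>p q. p \<in> S \<and> q \<in> S \<and> cell_adj p q)\<^sup>*\<^sup>* x y) \<and>
        \<not> (\<exists>a b. (a, b) \<in> S \<and> (Suc a, b) \<in> S \<and> (a, Suc b) \<in> S \<and> (Suc a, Suc b) \<in> S))"

definition is_5core :: "nat list \<Rightarrow> bool" where
  "is_5core la \<longleftrightarrow> is_partition la \<and> \<not> (\<exists>mu. rim_hook la mu 5)"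

definition cores5 :: "nat \<Rightarrow> nat list set" where
  "cores5 n = {la. is_5core la \<and> sum_list la = n}"

definition r_count :: "nat list \<Rightarrow> int \<Rightarrow> nat" where
  "r_count la i = card {(a, b) \<in> diagram la. (int b - int a) mod 5 = i}"

definition nvec :: "nat list \<Rightarrow> nat \<Rightarrow> int" where
  "nvec la m = int (r_count la (int m)) - int (r_count la (int ((m + 1) mod 5)))"

definition crank5 :: "nat list \<Rightarrow> int" where
  "crank5 la = (2 * (1 + nvec la 0 - nvec la 1 - nvec la 2 + nvec la 3)) mod 5"

definition a5 :: "int \<Rightarrow> nat \<Rightarrow> nat" where
  "a5 i n = card {la \<in> cores5 n. srank la mod 4 = i}"

definition a5j :: "int \<Rightarrow> int \<Rightarrow> nat \<Rightarrow> nat" where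
  "a5j j i n = card {la \<in> cores5 n. srank la mod 4 = i \<and> crank5 la = j}"

end

theory Submission
  imports Defs
begin

definition pp :: "nat list \<Rightarrow> nat \<Rightarrow> nat" where
  "pp la a = (if a < length la then la!a else 0)"

definition xx :: "nat list \<Rightarrow> nat \<Rightarrow> int" where
  "xx la a = int (pp la a) - int a - 1"

lemma part_mono:
  assumes "is_partition la" "i \<le> j"
  shows "pp la j \<le> pp la i"
  using assms sorted_rev_nth_mono[of la i j]
  by (auto simp: pp_def is_partition_def)

lemma part_pos:
  assumes "is_partition la" "a < length la"
  shows "pp la a > 0"
proof -
  have "la ! a \<in> set la" using assms by auto
  then have "la ! a \<noteq> 0" using assms(1) unfolding is_partition_def by metis
  then show ?thesis using assms by (simp add: pp_def)
qed

lemma diagram_pp: "diagram la = {(a,b). b < pp la a}"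
  by (auto simp: diagram_def pp_def split: if_splits)

lemma xx_strict:
  assumes "is_partition la" "i < j"
  shows "xx la j < xx la i"
  using part_mono[OF assms(1), of i j] assms(2) by (simp add: xx_def)

lemma xx_inj: "is_partition la \<Longrightarrow> inj (xx la)"
  by (metis injI linorder_neqE_nat order_less_irrefl xx_strict)

lemma xx_ge: "xx la a \<ge> - int a - 1"
  by (simp add: xx_def)

lemma xx_tail: "a \<ge> length la \<Longrightarrow> xx la a = - int a - 1"
  by (simp add: xx_def pp_def)

lemma xx_lt_tail: "a < length la \<Longrightarrow> is_partition la \<Longrightarrow> xx la a \<ge> - int a"
  using part_pos[of la a] by (simp add: xx_def)

lemma xx_mono: "is_partition la \<Longrightarrow> i \<le> j \<Longrightarrow> xx la j \<le> xx la i"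
  by (metis order_le_less order_less_imp_le xx_strict)

lemma mk_partition:
  fixes q :: "nat \<Rightarrow> nat"
  assumes dec: "\<And>r. q (Suc r) \<le> q r" and z: "q L = 0"
  shows "\<exists>mu. is_partition mu \<and> (\<forall>r. pp mu r = q r)"
proof -
  define K where "K = (LEAST r. q r = 0)"
  have qK: "q K = 0" unfolding K_def by (rule LeastI[of _ L]) (rule z)
  have lt: "r < K \<Longrightarrow> q r \<noteq> 0" for r unfolding K_def by (rule not_less_Least)
  have mono: "i \<le> j \<Longrightarrow> q j \<le> q i" for i j
    using lift_Suc_antimono_le[of q, OF dec] by blast
  have ge: "r \<ge> K \<Longrightarrow> q r = 0" for r using mono[of K r] qK by simp
  define mu where "mu = map q [0..<K]"
  have pp: "pp mu r = q r" for r
    using ge[of r] by (auto simp: pp_def mu_def)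
  have "sorted (rev mu)"
    unfolding sorted_rev_iff_nth_mono by (auto simp: mu_def intro: mono)
  moreover have "0 \<notin> set mu" using lt by (force simp: mu_def)
  ultimately show ?thesis using pp by (auto simp: is_partition_def)
qed

lemma tele:
  fixes P q :: "nat \<Rightarrow> nat"
  assumes "a \<le> b" "\<And>r. a \<le> r \<Longrightarrow> r < b \<Longrightarrow> int (P (Suc r)) = int (q r) + 1"
  shows "(\<Sum>r\<in>{a..b}. int (P r) - int (q r)) = int (P a) - int (q b) + int b - int a"
  using assms
proof (induction b rule: dec_induct)
  case base
  then show ?case by simp
next
  case (step b)
  have "(\<Sum>r\<in>{a..Suc b}. int (P r) - int (q r)) = (\<Sum>r\<in>{a..b}. int (P r) - int (q r)) + (int (P (Suc b)) - int (q (Suc b)))"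
    using step.hyps(1) by (simp add: sum.cl_ivl_Suc)
  also have "\<dots> = int (P a) - int (q (Suc b)) + int (Suc b) - int a"
    using step by simp
  finally show ?case .
qed

lemma card_rows:
  fixes P q :: "nat \<Rightarrow> nat"
  assumes "\<And>r. q r \<le> P r"
  shows "int (card (Sigma {a..b} (\<lambda>r. {q r..<P r}))) = (\<Sum>r\<in>{a..b}. int (P r) - int (q r))"
  using assms by (simp add: card_SigmaI of_nat_diff)

lemma rtranclp_sym_rel:
  assumes "R\<^sup>*\<^sup>* x y" "\<And>u v. R u v \<Longrightarrow> R v u"
  shows "R\<^sup>*\<^sup>* y x"
  using assms(1)
proof (induction rule: rtranclp_induct)
  case base then show ?case by simp
next
  case (step y z)
  then show ?case using assms(2) by (meson converse_rtranclp_into_rtranclp)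
qed

lemma rtranclp_closed:
  assumes "R\<^sup>*\<^sup>* x y" "x \<in> T" "\<And>u v. R u v \<Longrightarrow> u \<in> T \<Longrightarrow> v \<in> T"
  shows "y \<in> T"
  using assms by (induction rule: rtranclp_induct) auto

lemma diag_sub_iff: "diagram mu \<subseteq> diagram la \<longleftrightarrow> (\<forall>r. pp mu r \<le> pp la r)"
proof
  assume H: "diagram mu \<subseteq> diagram la"
  show "\<forall>r. pp mu r \<le> pp la r"
  proof
    fix r
    show "pp mu r \<le> pp la r"
    proof (cases "pp mu r = 0")
      case False
      then have "(r, pp mu r - 1) \<in> diagram mu" by (simp add: diagram_pp)
      then have "(r, pp mu r - 1) \<in> diagram la" using H by blast
      then show ?thesis by (simp add: diagram_pp)
    qed simp
  qed
next
  assume "\<forall>r. pp mu r \<le> pp la r"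
  then show "diagram mu \<subseteq> diagram la" by (auto simp: diagram_pp intro: less_le_trans)
qed

lemma finite_diagram: "finite (diagram la)"
proof -
  have "diagram la \<subseteq> {..<length la} \<times> {..<(if la = [] then 0 else Max (set la))}"
    by (auto simp: diagram_def intro: less_le_trans)
  then show ?thesis by (rule finite_subset) auto
qed

lemma rim_hook_imp:
  assumes la: "is_partition la" and rh: "rim_hook la mu k" and kpos: "k > 0"
  shows "\<exists>a. xx la a - int k \<notin> range (xx la)"
proof -
  define P where "P = pp la"
  define q where "q = pp mu"
  define S where "S = diagram la - diagram mu"
  define Rel where "Rel = (\<lambda>p q. p \<in> S \<and> q \<in> S \<and> cell_adj p q)"
  have mu: "is_partition mu" and sub: "diagram mu \<subseteq> diagram la" and cardS: "card S = k"
    and conn: "\<And>x y. x \<in> S \<Longrightarrow> y \<in> S \<Longrightarrow> Rel\<^sup>*\<^sup>* x y"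
    and no2: "\<not> (\<exists>a b. (a, b) \<in> S \<and> (Suc a, b) \<in> S \<and> (a, Suc b) \<in> S \<and> (Suc a, Suc b) \<in> S)"
    using rh unfolding rim_hook_def S_def Rel_def Let_def by blast+
  have qP: "q r \<le> P r" for r using sub diag_sub_iff unfolding P_def q_def by blast
  have Sdef: "S = {(r,c). q r \<le> c \<and> c < P r}"
    unfolding S_def P_def q_def diagram_pp by auto
  have qmono: "i \<le> j \<Longrightarrow> q j \<le> q i" for i j using part_mono[OF mu] unfolding q_def by blast
  have Pmono: "i \<le> j \<Longrightarrow> P j \<le> P i" for i j using part_mono[OF la] unfolding P_def by blast
  define R where "R = {r. q r < P r}"
  have Rfin: "finite R"
  proof -
    have "R \<subseteq> {..<length la}" unfolding R_def P_def pp_def by auto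
    then show ?thesis by (rule finite_subset) auto
  qed
  have "S \<noteq> {}" using cardS kpos by auto
  then have Rne: "R \<noteq> {}" unfolding Sdef R_def using le_less_trans by fastforce
  define a where "a = Min R"
  define a2 where "a2 = Max R"
  have aR: "a \<in> R" unfolding a_def using Rfin Rne by simp
  have a2R: "a2 \<in> R" unfolding a2_def using Rfin Rne by simp
  have aa2: "a \<le> a2" unfolding a_def a2_def using Rfin Rne by simp
  have inR: "r \<in> R \<Longrightarrow> a \<le> r \<and> r \<le> a2" for r unfolding a_def a2_def using Rfin by simp
  have symR: "Rel u v \<Longrightarrow> Rel v u" for u v unfolding Rel_def cell_adj_def by auto
  have c1: "q r < P (Suc r)" if "a \<le> r" "r < a2" for r
  proof (rule ccontr)
    assume "\<not> q r < P (Suc r)"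
    then have H: "P (Suc r) \<le> q r" by simp
    define T where "T = {z \<in> S. fst z \<le> r}"
    have cl: "v \<in> T" if "Rel u v" "u \<in> T" for u v
    proof -
      have uS: "u \<in> S" and vS: "v \<in> S" and adj: "cell_adj u v" using that unfolding Rel_def by auto
      show ?thesis
      proof (rule ccontr)
        assume "v \<notin> T"
        then have "fst v > r" using vS unfolding T_def by auto
        moreover have "fst u \<le> r" using that(2) unfolding T_def by auto
        ultimately have "fst v = Suc (fst u) \<and> snd v = snd u" using adj unfolding cell_adj_def by auto
        then have "fst u = r" "fst v = Suc r" "snd v = snd u" using \<open>fst v > r\<close> \<open>fst u \<le> r\<close> by auto
        moreover have "q (fst u) \<le> snd u" using uS unfolding Sdef by auto
        moreover have "snd v < P (fst v)" using vS unfolding Sdef by auto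
        ultimately show False using H by auto
      qed
    qed
    have s1: "(a, q a) \<in> S" using aR unfolding Sdef R_def by auto
    have s2: "(a2, q a2) \<in> S" using a2R unfolding Sdef R_def by auto
    have "(a, q a) \<in> T" using s1 that unfolding T_def by auto
    then have "(a2, q a2) \<in> T" using rtranclp_closed[OF conn[OF s1 s2]] cl by blast
    then show False using that unfolding T_def by auto
  qed
  have c2: "P (Suc r) \<le> Suc (q r)" if "a \<le> r" "r < a2" for r
  proof (rule ccontr)
    assume "\<not> P (Suc r) \<le> Suc (q r)"
    then have H: "q r + 2 \<le> P (Suc r)" by simp
    have "P (Suc r) \<le> P r" using Pmono by simp
    moreover have "q (Suc r) \<le> q r" using qmono by simp
    ultimately have "(r, q r) \<in> S \<and> (Suc r, q r) \<in> S \<and> (r, Suc (q r)) \<in> S \<and> (Suc r, Suc (q r)) \<in> S"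
      using H unfolding Sdef by auto
    then show False using no2 by blast
  qed
  have eqs: "int (P (Suc r)) = int (q r) + 1" if "a \<le> r" "r < a2" for r
    using c1[OF that] c2[OF that] by simp
  have Ssig: "S = Sigma {a..a2} (\<lambda>r. {q r..<P r})"
  proof
    show "S \<subseteq> Sigma {a..a2} (\<lambda>r. {q r..<P r})"
    proof
      fix z assume "z \<in> S"
      then have "fst z \<in> R" "q (fst z) \<le> snd z" "snd z < P (fst z)" unfolding Sdef R_def by auto
      then show "z \<in> Sigma {a..a2} (\<lambda>r. {q r..<P r})" using inR by (cases z) auto
    qed
  next
    show "Sigma {a..a2} (\<lambda>r. {q r..<P r}) \<subseteq> S" unfolding Sdef by auto
  qed
  have "int k = int (P a) - int (q a2) + int a2 - int a"
    using cardS card_rows[of q P a a2] qP tele[OF aa2, of P q] eqs Ssig by simp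
  define t where "t = int (q a2) - int a2 - 1"
  have kt: "xx la a - int k = t" unfolding t_def xx_def P_def[symmetric] using \<open>int k = _\<close> by simp
  have tnot: "t \<notin> range (xx la)"
  proof
    assume "t \<in> range (xx la)"
    then obtain r where r: "xx la r = t" by auto
    show False
    proof (cases "r \<le> a2")
      case True
      have "xx la a2 \<le> xx la r" using xx_mono[OF la True] .
      moreover have "xx la a2 > t" using a2R unfolding R_def t_def xx_def P_def q_def by simp
      ultimately show False using r by simp
    next
      case False
      have "xx la r \<le> xx la (Suc a2)" using xx_mono[OF la] False by simp
      moreover have "Suc a2 \<notin> R" using inR[of "Suc a2"] by auto
      then have "P (Suc a2) = q (Suc a2)" using qP[of "Suc a2"] unfolding R_def by simp
      moreover have "q (Suc a2) \<le> q a2" using qmono by simp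
      ultimately have "xx la r < t" unfolding t_def xx_def P_def by simp
      then show False using r by simp
    qed
  qed
  show ?thesis using kt tnot by metis
qed

lemma imp_rim_hook:
  assumes la: "is_partition la" and kpos: "k > 0" and tn: "xx la a - int k \<notin> range (xx la)"
  shows "\<exists>mu. rim_hook la mu k"
proof -
  define P where "P = pp la"
  define t where "t = xx la a - int k"
  have Pmono: "i \<le> j \<Longrightarrow> P j \<le> P i" for i j using part_mono[OF la] unfolding P_def by blast
  have xP: "xx la r = int (P r) - int r - 1" for r unfolding xx_def P_def by simp
  define A2 where "A2 = {r. xx la r > t}"
  have A2fin: "finite A2"
  proof -
    have "A2 \<subseteq> {..< nat (int (P 0) - t)}"
    proof
      fix r assume "r \<in> A2"
      then have "xx la r > t" unfolding A2_def by simp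
      moreover have "P r \<le> P 0" using Pmono by simp
      ultimately show "r \<in> {..< nat (int (P 0) - t)}" using xP[of r] by simp
    qed
    then show ?thesis by (rule finite_subset) auto
  qed
  have aA2: "a \<in> A2" unfolding A2_def t_def using kpos by simp
  define a2 where "a2 = Max A2"
  have a2A: "a2 \<in> A2" unfolding a2_def using Max_in[OF A2fin] aA2 by blast
  have aa2: "a \<le> a2" unfolding a2_def using A2fin aA2 by simp
  have xa2: "xx la a2 > t" using a2A unfolding A2_def by simp
  have "Suc a2 \<notin> A2" using A2fin a2_def by (metis Max_ge Suc_n_not_le_n)
  moreover have "xx la (Suc a2) \<noteq> t" using tn unfolding t_def by (metis rangeI)
  ultimately have xs: "xx la (Suc a2) < t" unfolding A2_def by simp
  have tlow: "t + int a2 + 1 \<ge> 0" using xs xx_ge[where la=la and a="Suc a2"] by simp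
  have Pa2: "t + int a2 + 1 < int (P a2)" using xa2 xP[of a2] by simp
  have Pa2': "int (P (Suc a2)) \<le> t + int a2 + 1" using xs xP[of "Suc a2"] by simp
  define q where "q r = (if r < a then P r else if r < a2 then P (Suc r) - 1
                         else if r = a2 then nat (t + int a2 + 1) else P r)" for r
  have qa2: "int (q a2) = t + int a2 + 1" unfolding q_def using tlow aa2 by simp
  have Ppos: "P (Suc r) \<ge> 1" if "r < a2" for r
  proof -
    have "int (P a2) > 0" using Pa2 tlow by simp
    moreover have "P a2 \<le> P (Suc r)" using Pmono that by simp
    ultimately show ?thesis by simp
  qed
  have eqs: "int (P (Suc r)) = int (q r) + 1" if "a \<le> r" "r < a2" for r
    using that Ppos[of r] unfolding q_def by simp
  have qP: "q r \<le> P r" for r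
  proof -
    consider "r < a" | "a \<le> r" "r < a2" | "r = a2" | "r > a2" by linarith
    then show ?thesis
    proof cases
      case 2 then show ?thesis using Pmono[of r "Suc r"] unfolding q_def by simp
    next
      case 3 then show ?thesis using Pa2 qa2 by simp
    qed (auto simp: q_def)
  qed
  have qdec: "q (Suc r) \<le> q r" for r
  proof -
    consider "Suc r < a" | "Suc r = a" | "a \<le> r" "Suc r < a2" | "a \<le> r" "Suc r = a2" | "r = a2" | "r > a2"
      by linarith
    then show ?thesis
    proof cases
      case 1 then show ?thesis using Pmono[of r "Suc r"] unfolding q_def by simp
    next
      case 2 then show ?thesis using qP[of "Suc r"] Pmono[of r "Suc r"] unfolding q_def by simp
    next
      case 3 then show ?thesis using Pmono[of "Suc r" "Suc (Suc r)"] unfolding q_def by simp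
    next
      case 4 then show ?thesis using qa2 Pa2 unfolding q_def by simp
    next
      case 5
      then have "q (Suc r) = P (Suc r)" unfolding q_def by simp
      then show ?thesis using qa2 Pa2' 5 by simp
    next
      case 6 then show ?thesis using Pmono[of r "Suc r"] unfolding q_def by simp
    qed
  qed
  have "q (length la) = 0" using qP[of "length la"] unfolding P_def pp_def by simp
  then obtain mu where mu: "is_partition mu" and qmu: "\<And>r. pp mu r = q r"
    using mk_partition[of q, OF qdec] by blast
  define S where "S = diagram la - diagram mu"
  define Rel where "Rel = (\<lambda>p q. p \<in> S \<and> q \<in> S \<and> cell_adj p q)"
  have sub: "diagram mu \<subseteq> diagram la" using diag_sub_iff qmu qP unfolding P_def by metis
  have Sdef: "S = {(r,c). q r \<le> c \<and> c < P r}"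
    unfolding S_def P_def diagram_pp qmu by auto
  have outside: "r < a \<or> r > a2 \<Longrightarrow> q r = P r" for r unfolding q_def by auto
  have Ssig: "S = Sigma {a..a2} (\<lambda>r. {q r..<P r})"
  proof
    show "S \<subseteq> Sigma {a..a2} (\<lambda>r. {q r..<P r})"
    proof
      fix z assume "z \<in> S"
      then have "q (fst z) \<le> snd z" "snd z < P (fst z)" unfolding Sdef by auto
      then have "a \<le> fst z \<and> fst z \<le> a2" using outside[of "fst z"] by (metis leD not_le_imp_less)
      then show "z \<in> Sigma {a..a2} (\<lambda>r. {q r..<P r})" using \<open>q (fst z) \<le> snd z\<close> \<open>snd z < P (fst z)\<close>
        by (cases z) auto
    qed
  next
    show "Sigma {a..a2} (\<lambda>r. {q r..<P r}) \<subseteq> S" unfolding Sdef by auto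
  qed
  have "int (card S) = int (P a) - int (q a2) + int a2 - int a"
    using card_rows[of q P a a2] qP tele[OF aa2, of P q] eqs Ssig by simp
  also have "\<dots> = int k" using qa2 xP[of a] unfolding t_def by simp
  finally have cardS: "card S = k" by simp
  have no2: "\<not> (\<exists>a b. (a, b) \<in> S \<and> (Suc a, b) \<in> S \<and> (a, Suc b) \<in> S \<and> (Suc a, Suc b) \<in> S)"
  proof
    assume "\<exists>r c. (r, c) \<in> S \<and> (Suc r, c) \<in> S \<and> (r, Suc c) \<in> S \<and> (Suc r, Suc c) \<in> S"
    then obtain r c where h: "(r, c) \<in> S" "(Suc r, Suc c) \<in> S" "(Suc r, c) \<in> S" by blast
    have "a \<le> r" "Suc r \<le> a2" using h Ssig by auto
    then have "int (P (Suc r)) = int (q r) + 1" using eqs by simp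
    moreover have "q r \<le> c" using h(1) Sdef by auto
    moreover have "Suc c < P (Suc r)" using h(2) Sdef by auto
    ultimately show False by simp
  qed
  have row: "Rel\<^sup>*\<^sup>* (r, q r + d) (r, q r)" if "q r + d < P r" for r d
    using that
  proof (induction d)
    case 0 then show ?case by simp
  next
    case (Suc d)
    have "Rel (r, q r + Suc d) (r, q r + d)"
      using Suc.prems unfolding Rel_def Sdef cell_adj_def by auto
    moreover have "q r + d < P r" using Suc.prems by simp
    ultimately show ?case using Suc.IH converse_rtranclp_into_rtranclp by metis
  qed
  have down: "Rel\<^sup>*\<^sup>* (r, q r) (a2, q a2)" if "a \<le> r" "r \<le> a2" for r
    using that
  proof (induction "a2 - r" arbitrary: r)
    case 0 then show ?case by simp
  next
    case (Suc m)
    then have r2: "r < a2" by simp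
    have e: "int (P (Suc r)) = int (q r) + 1" using eqs Suc.prems r2 by simp
    have "q (Suc r) \<le> q r" using qdec by simp
    have "q r < P r" using qP[of r] e Pmono[of r "Suc r"] by simp
    then have st1: "Rel (r, q r) (Suc r, q r)"
      using e \<open>q (Suc r) \<le> q r\<close> unfolding Rel_def Sdef cell_adj_def by auto
    obtain d where d: "q r = q (Suc r) + d" using \<open>q (Suc r) \<le> q r\<close> le_Suc_ex by blast
    have st2: "Rel\<^sup>*\<^sup>* (Suc r, q r) (Suc r, q (Suc r))"
      using row[of "Suc r" d] d e by simp
    have st3: "Rel\<^sup>*\<^sup>* (Suc r, q (Suc r)) (a2, q a2)"
      using Suc.hyps(1)[of "Suc r"] Suc.hyps(2) Suc.prems r2 by simp
    show ?case using st1 st2 st3 by (meson converse_rtranclp_into_rtranclp rtranclp_trans)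
  qed
  have tostar: "Rel\<^sup>*\<^sup>* z (a2, q a2)" if "z \<in> S" for z
  proof -
    obtain r c where z: "z = (r, c)" by (cases z)
    have "a \<le> r" "r \<le> a2" "q r \<le> c" "c < P r" using that z Ssig by auto
    then obtain d where "c = q r + d" using le_Suc_ex by blast
    then have "Rel\<^sup>*\<^sup>* (r, c) (r, q r)" using row[of r d] \<open>c < P r\<close> by simp
    then show ?thesis using down[OF \<open>a \<le> r\<close> \<open>r \<le> a2\<close>] z by simp
  qed
  have symR: "Rel u v \<Longrightarrow> Rel v u" for u v unfolding Rel_def cell_adj_def by auto
  have conn: "\<forall>x\<in>S. \<forall>y\<in>S. Rel\<^sup>*\<^sup>* x y"
  proof (intro ballI)
    fix x y assume "x \<in> S" "y \<in> S"
    have "Rel\<^sup>*\<^sup>* (a2, q a2) y" using rtranclp_sym_rel[of Rel y "(a2, q a2)"] tostar[OF \<open>y \<in> S\<close>] symR by blast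
    then show "Rel\<^sup>*\<^sup>* x y" using tostar[OF \<open>x \<in> S\<close>] by (meson rtranclp_trans)
  qed
  have "rim_hook la mu k"
    unfolding rim_hook_def Let_def
    using mu sub cardS no2 conn unfolding S_def Rel_def by blast
  then show ?thesis by blast
qed

lemma is_5core_iff:
  "is_5core la \<longleftrightarrow> is_partition la \<and> (\<forall>a. xx la a - 5 \<in> range (xx la))"
proof
  assume "is_5core la"
  then have la: "is_partition la" and nr: "\<not> (\<exists>mu. rim_hook la mu 5)" unfolding is_5core_def by auto
  show "is_partition la \<and> (\<forall>a. xx la a - 5 \<in> range (xx la))"
    using imp_rim_hook[OF la, of 5] nr la by force
next
  assume h: "is_partition la \<and> (\<forall>a. xx la a - 5 \<in> range (xx la))"
  show "is_5core la" unfolding is_5core_def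
    using h rim_hook_imp[of la _ 5] by force
qed

definition runner :: "nat list \<Rightarrow> (nat \<Rightarrow> int) \<Rightarrow> bool" where
  "runner la c \<longleftrightarrow> (\<forall>y. y \<in> range (xx la) \<longleftrightarrow> y div 5 < c (nat (y mod 5)))"

lemma range_tail:
  assumes "y \<le> - int (length la) - 1"
  shows "y \<in> range (xx la)"
proof -
  have "xx la (nat (- y - 1)) = y" using assms xx_tail[of la "nat (-y-1)"] by simp
  then show ?thesis by (metis rangeI)
qed

lemma range_bound:
  assumes "is_partition la" "y \<in> range (xx la)"
  shows "y \<le> xx la 0"
  using assms xx_mono[OF assms(1)] by auto

lemma int_downset:
  fixes A :: "int set"
  assumes "m0 \<in> A" "\<And>m. m \<in> A \<Longrightarrow> m \<le> B" "\<And>m. m \<in> A \<Longrightarrow> m - 1 \<in> A"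
  shows "\<exists>c. \<forall>m. m \<in> A \<longleftrightarrow> m < c"
proof -
  define F where "F = A \<inter> {m0..B}"
  have Ffin: "finite F" unfolding F_def by simp
  have m0F: "m0 \<in> F" unfolding F_def using assms by auto
  define mu where "mu = Max F"
  have muA: "mu \<in> A" unfolding mu_def using Max_in[OF Ffin] m0F F_def by blast
  have m0mu: "m0 \<le> mu" unfolding mu_def using Ffin m0F by simp
  have dn: "mu - int d \<in> A" for d
  proof (induction d)
    case 0 then show ?case using muA by simp
  next
    case (Suc d)
    then have "mu - int d - 1 \<in> A" using assms(3) by blast
    then show ?case by (simp add: algebra_simps)
  qed
  have "m \<in> A \<longleftrightarrow> m < mu + 1" for m
  proof
    assume "m \<in> A"
    show "m < mu + 1"
    proof (cases "m \<ge> m0")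
      case True
      then have "m \<in> F" using \<open>m \<in> A\<close> assms(2) unfolding F_def by auto
      then show ?thesis unfolding mu_def using Ffin by simp
    next
      case False then show ?thesis using m0mu by simp
    qed
  next
    assume "m < mu + 1"
    then have "m = mu - int (nat (mu - m))" by simp
    then show "m \<in> A" using dn by metis
  qed
  then show ?thesis by blast
qed

lemma core_runner:
  assumes "is_5core la"
  shows "\<exists>c. runner la c"
proof -
  have la: "is_partition la" and cl: "\<And>a. xx la a - 5 \<in> range (xx la)"
    using assms is_5core_iff by auto
  have cl': "y - 5 \<in> range (xx la)" if "y \<in> range (xx la)" for y using that cl by auto
  have "\<forall>r. \<exists>c. \<forall>m. int r + 5 * m \<in> range (xx la) \<longleftrightarrow> m < c"
  proof
    fix r
    let ?A = "{m. int r + 5 * m \<in> range (xx la)}"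
    have "- int (length la) - int r - 1 \<in> ?A"
      using range_tail[of "int r + 5 * (- int (length la) - int r - 1)" la] by simp
    moreover have "m \<le> \<bar>xx la 0\<bar>" if "m \<in> ?A" for m
      using range_bound[OF la, of "int r + 5 * m"] that by simp
    moreover have "m - 1 \<in> ?A" if "m \<in> ?A" for m
      using cl'[of "int r + 5 * m"] that by (simp add: algebra_simps)
    ultimately show "\<exists>c. \<forall>m. int r + 5 * m \<in> range (xx la) \<longleftrightarrow> m < c"
      using int_downset[of _ ?A] by (metis mem_Collect_eq)
  qed
  then obtain c where c: "\<And>r m. int r + 5 * m \<in> range (xx la) \<longleftrightarrow> m < c r" by metis
  have "runner la c" unfolding runner_def
  proof
    fix y :: int
    have "y = int (nat (y mod 5)) + 5 * (y div 5)" by simp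
    then show "y \<in> range (xx la) \<longleftrightarrow> y div 5 < c (nat (y mod 5))" using c by metis
  qed
  then show ?thesis by blast
qed

lemma tele_int:
  fixes F g :: "int \<Rightarrow> int"
  assumes "a \<le> b" "\<And>m. F (m + 1) - F m = g m"
  shows "(\<Sum>m\<in>{a..<b}. g m) = F b - F a"
proof -
  obtain d where b: "b = a + int d" using assms(1) by (metis zle_iff_zadd)
  have "(\<Sum>m\<in>{a..<a + int d}. g m) = F (a + int d) - F a"
  proof (induction d)
    case 0 then show ?case by simp
  next
    case (Suc d)
    have "{a..<a + int (Suc d)} = insert (a + int d) {a..<a + int d}" by auto
    then have "(\<Sum>m\<in>{a..<a + int (Suc d)}. g m) = g (a + int d) + (\<Sum>m\<in>{a..<a + int d}. g m)" by simp
    also have "\<dots> = F (a + int (Suc d)) - F a" using Suc assms(2)[of "a + int d"] by (simp add: algebra_simps)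
    finally show ?case .
  qed
  then show ?thesis using b by simp
qed

lemma runner_decomp:
  fixes c :: "nat \<Rightarrow> int" and K :: nat and f :: "int \<Rightarrow> int"
  assumes "\<And>r. r < 5 \<Longrightarrow> - int K \<le> c r"
  shows "(\<Sum>y\<in>{y. - 5 * int K \<le> y \<and> y div 5 < c (nat (y mod 5))}. f y)
       = (\<Sum>r<5. \<Sum>m\<in>{- int K..<c r}. f (int r + 5 * m))"
proof -
  define G where "G = Sigma {..<5::nat} (\<lambda>r. {- int K..<c r})"
  define g where "g = (\<lambda>(r::nat, m::int). int r + 5 * m)"
  define Y where "Y = {y. - 5 * int K \<le> y \<and> y div 5 < c (nat (y mod 5))}"
  have inj: "inj_on g G"
  proof (rule inj_onI)
    fix u v assume "u \<in> G" "v \<in> G" "g u = g v"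
    obtain r m where u: "u = (r, m)" by (cases u)
    obtain r' m' where v: "v = (r', m')" by (cases v)
    have r5: "r < 5" "r' < 5" using \<open>u \<in> G\<close> \<open>v \<in> G\<close> u v G_def by auto
    have e: "int r + 5 * m = int r' + 5 * m'" using \<open>g u = g v\<close> u v g_def by simp
    have "(int r + 5 * m) mod 5 = int r" using r5 by simp
    moreover have "(int r' + 5 * m') mod 5 = int r'" using r5 by simp
    ultimately have "r = r'" using e by simp
    then show "u = v" using e u v by simp
  qed
  have img: "g ` G = Y"
  proof
    show "g ` G \<subseteq> Y"
    proof
      fix y assume "y \<in> g ` G"
      then obtain r m where "r < 5" "- int K \<le> m" "m < c r" "y = int r + 5 * m"
        unfolding G_def g_def by auto
      moreover have "(int r + 5 * m) div 5 = m" "(int r + 5 * m) mod 5 = int r" using \<open>r < 5\<close> by auto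
      ultimately show "y \<in> Y" unfolding Y_def by simp
    qed
  next
    show "Y \<subseteq> g ` G"
    proof
      fix y assume "y \<in> Y"
      then have h: "- 5 * int K \<le> y" "y div 5 < c (nat (y mod 5))" unfolding Y_def by auto
      have "(nat (y mod 5), y div 5) \<in> G" using h unfolding G_def by auto
      moreover have "g (nat (y mod 5), y div 5) = y" unfolding g_def by simp
      ultimately show "y \<in> g ` G" by (metis image_eqI)
    qed
  qed
  have "(\<Sum>y\<in>Y. f y) = (\<Sum>z\<in>G. f (g z))"
    using sum.reindex_bij_betw[of g G Y f] inj img unfolding bij_betw_def by simp
  also have "\<dots> = (\<Sum>r<5. \<Sum>m\<in>{- int K..<c r}. f (int r + 5 * m))"
    unfolding G_def g_def by (subst sum.Sigma) (auto simp: prod.case_distrib)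
  finally show ?thesis unfolding Y_def .
qed

lemma runner_sum:
  fixes f :: "int \<Rightarrow> int" and F :: "nat \<Rightarrow> int \<Rightarrow> int"
  assumes la: "is_partition la" and run: "runner la c"
    and FF: "\<And>r m. r < 5 \<Longrightarrow> F r (m + 1) - F r m = f (int r + 5 * m)"
  shows "(\<Sum>a<length la. f (xx la a) - f (- int a - 1)) = (\<Sum>r<5. F r (c r) - F r 0)"
proof -
  define L where "L = length la"
  define K where "K = L + (\<Sum>r<5. nat (- c r))"
  have hK: "- int K \<le> c r" if "r < 5" for r
  proof -
    have "nat (- c r) \<le> (\<Sum>r<5. nat (- c r))" using that by (intro member_le_sum) auto
    then show ?thesis unfolding K_def by linarith
  qed
  have hK0: "- int K \<le> (\<lambda>_. 0::int) r" for r by simp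
  define T where "T = {- 5 * int K .. - int L - 1}"
  define Y1 where "Y1 = {y. - 5 * int K \<le> y \<and> y div 5 < c (nat (y mod 5))}"
  define Y0 where "Y0 = {y. - 5 * int K \<le> y \<and> y div 5 < (\<lambda>_. 0::int) (nat (y mod 5))}"
  have LK: "L \<le> K" unfolding K_def by simp
  have Y1eq: "Y1 = xx la ` {..<L} \<union> T"
  proof
    show "Y1 \<subseteq> xx la ` {..<L} \<union> T"
    proof
      fix y assume "y \<in> Y1"
      then have "y \<in> range (xx la)" "- 5 * int K \<le> y" using run unfolding Y1_def runner_def by auto
      then obtain a where a: "y = xx la a" by auto
      show "y \<in> xx la ` {..<L} \<union> T"
      proof (cases "a < L")
        case True then show ?thesis using a by auto
      next
        case False
        then have "y = - int a - 1" using a xx_tail[of la a] L_def by simp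
        then show ?thesis using False \<open>- 5 * int K \<le> y\<close> unfolding T_def by auto
      qed
    qed
  next
    show "xx la ` {..<L} \<union> T \<subseteq> Y1"
    proof
      fix y assume "y \<in> xx la ` {..<L} \<union> T"
      then have "y \<in> range (xx la) \<and> - 5 * int K \<le> y"
      proof
        assume "y \<in> xx la ` {..<L}"
        then obtain a where "a < L" "y = xx la a" by auto
        then show ?thesis using xx_ge[where la=la and a=a] LK by auto
      next
        assume "y \<in> T"
        then show ?thesis using range_tail[of y la] unfolding T_def L_def by auto
      qed
      then show "y \<in> Y1" using run unfolding Y1_def runner_def by auto
    qed
  qed
  have disj1: "xx la ` {..<L} \<inter> T = {}"
    using xx_lt_tail[OF _ la] unfolding T_def L_def by fastforce
  have Y0eq: "Y0 = (\<lambda>a. - int a - 1) ` {..<L} \<union> T"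
  proof
    show "Y0 \<subseteq> (\<lambda>a. - int a - 1) ` {..<L} \<union> T"
    proof
      fix y assume "y \<in> Y0"
      then have y: "y < 0" "- 5 * int K \<le> y" unfolding Y0_def by auto
      show "y \<in> (\<lambda>a. - int a - 1) ` {..<L} \<union> T"
      proof (cases "y \<le> - int L - 1")
        case True then show ?thesis using y unfolding T_def by auto
      next
        case False
        then have "nat (- y - 1) < L" "y = - int (nat (- y - 1)) - 1" using y by auto
        then show ?thesis by blast
      qed
    qed
  next
    show "(\<lambda>a. - int a - 1) ` {..<L} \<union> T \<subseteq> Y0"
      unfolding Y0_def T_def using LK by auto
  qed
  have disj0: "(\<lambda>a. - int a - 1) ` {..<L} \<inter> T = {}" unfolding T_def by auto
  have s1: "(\<Sum>y\<in>Y1. f y) = (\<Sum>a<L. f (xx la a)) + (\<Sum>y\<in>T. f y)"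
  proof -
    have "inj_on (xx la) {..<L}" using xx_inj[OF la] by (simp add: inj_on_subset[of _ UNIV])
    then have "(\<Sum>y\<in>xx la ` {..<L}. f y) = (\<Sum>a<L. f (xx la a))" by (simp add: sum.reindex)
    moreover have "(\<Sum>y\<in>xx la ` {..<L} \<union> T. f y) = (\<Sum>y\<in>xx la ` {..<L}. f y) + (\<Sum>y\<in>T. f y)"
      using disj1 by (intro sum.union_disjoint) (auto simp: T_def)
    ultimately show ?thesis unfolding Y1eq by simp
  qed
  have inj0: "inj_on (\<lambda>a::nat. - int a - 1) {..<L}" by (auto intro: inj_onI)
  have s0: "(\<Sum>y\<in>Y0. f y) = (\<Sum>a<L. f (- int a - 1)) + (\<Sum>y\<in>T. f y)"
  proof -
    have "(\<Sum>y\<in>(\<lambda>a. - int a - 1) ` {..<L}. f y) = (\<Sum>a<L. f (- int a - 1))"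
      using inj0 by (simp add: sum.reindex)
    moreover have "(\<Sum>y\<in>(\<lambda>a. - int a - 1) ` {..<L} \<union> T. f y) = (\<Sum>y\<in>(\<lambda>a. - int a - 1) ` {..<L}. f y) + (\<Sum>y\<in>T. f y)"
      using disj0 by (intro sum.union_disjoint) (auto simp: T_def)
    ultimately show ?thesis unfolding Y0eq by simp
  qed
  have d1: "(\<Sum>y\<in>Y1. f y) = (\<Sum>r<5. F r (c r) - F r (- int K))"
  proof -
    have e: "(\<Sum>y\<in>Y1. f y) = (\<Sum>r<5. \<Sum>m\<in>{- int K..<c r}. f (int r + 5 * m))"
      unfolding Y1_def by (rule runner_decomp) (rule hK)
    show ?thesis unfolding e by (rule sum.cong) (auto intro!: tele_int FF hK)
  qed
  have d0: "(\<Sum>y\<in>Y0. f y) = (\<Sum>r<5. F r 0 - F r (- int K))"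
  proof -
    have e: "(\<Sum>y\<in>Y0. f y) = (\<Sum>r<5. \<Sum>m\<in>{- int K..<(\<lambda>_. 0) r}. f (int r + 5 * m))"
      unfolding Y0_def by (rule runner_decomp) (rule hK0)
    show ?thesis unfolding e by (rule sum.cong) (auto intro!: tele_int FF)
  qed
  have "(\<Sum>a<L. f (xx la a) - f (- int a - 1)) = (\<Sum>y\<in>Y1. f y) - (\<Sum>y\<in>Y0. f y)"
    using s1 s0 by (simp add: sum_subtractf)
  also have "\<dots> = (\<Sum>r<5. F r (c r) - F r 0)"
    unfolding d1 d0 by (simp add: sum_subtractf[symmetric])
  finally show ?thesis unfolding L_def .
qed

lemma tri: "((m::int) + 1) * m div 2 = m * (m - 1) div 2 + m"
proof -
  have "(m + 1) * m = m * (m - 1) + 2 * m" by (simp add: algebra_simps)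
  moreover have "(x + 2 * m) div 2 = x div 2 + m" for x :: int by presburger
  ultimately show ?thesis by simp
qed

lemma tri2: "((m::int) + 1) * (m + 1 - 1) div 2 = m * (m - 1) div 2 + m"
  using tri[of m] by simp

lemma runner_sum_c:
  assumes la: "is_partition la" and run: "runner la c"
  shows "(\<Sum>r<5. c r) = 0"
proof -
  have "(\<Sum>a<length la. (\<lambda>y. 1::int) (xx la a) - (\<lambda>y. 1) (- int a - 1)) = (\<Sum>r<5. (\<lambda>r m. m) r (c r) - (\<lambda>r m. m) r 0)"
    by (rule runner_sum[OF la run]) simp
  then show ?thesis by simp
qed

lemma runner_size:
  assumes la: "is_partition la" and run: "runner la c"
  shows "int (sum_list la) = (\<Sum>r<5. int r * c r + 5 * (c r * (c r - 1) div 2))"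
proof -
  have "(\<Sum>a<length la. (\<lambda>y. y) (xx la a) - (\<lambda>y. y) (- int a - 1)) =
        (\<Sum>r<5. (\<lambda>r m. int r * m + 5 * (m * (m - 1) div 2)) r (c r) - (\<lambda>r m. int r * m + 5 * (m * (m - 1) div 2)) r 0)"
  proof (rule runner_sum[OF la run])
    fix r m
    show "int r * (m + 1) + 5 * ((m + 1) * (m + 1 - 1) div 2) - (int r * m + 5 * (m * (m - 1) div 2)) = int r + 5 * m"
      unfolding tri2 by (simp add: algebra_simps)
  qed
  moreover have "int (sum_list la) = (\<Sum>a<length la. xx la a - (- int a - 1))"
  proof -
    have "sum_list la = (\<Sum>a<length la. la ! a)" by (simp add: sum_list_sum_nth atLeast0LessThan)
    then have "int (sum_list la) = (\<Sum>a<length la. int (la ! a))" by simp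
    also have "\<dots> = (\<Sum>a<length la. xx la a - (- int a - 1))"
      by (rule sum.cong) (auto simp: xx_def pp_def)
    finally show ?thesis .
  qed
  ultimately show ?thesis by simp
qed

lemma div5_step: "w div 5 - (w - 1) div 5 = (if w mod 5 = 0 then 1 else (0::int))" for w :: int
  by presburger

lemma div5_step2:
  fixes z i :: int
  assumes "0 \<le> i" "i < 5"
  shows "(z - i) div 5 - (z - 1 - i) div 5 = (if z mod 5 = i then 1 else 0)"
proof -
  have "z mod 5 = i \<longleftrightarrow> (z - i) mod 5 = 0" using assms by (metis mod_eq_dvd_iff mod_eq_0_iff_dvd mod_pos_pos_trivial)
  then show ?thesis using div5_step[of "z - i"] by (simp add: algebra_simps)
qed

lemma div5_lin: "(int r + 5 * m - int i) div 5 = (int r - int i) div 5 + m"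
proof -
  have "int r + 5 * m - int i = (int r - int i) + m * 5" by simp
  then show ?thesis by simp
qed

lemma row_count5:
  fixes i :: int
  assumes "0 \<le> i" "i < 5"
  shows "int (card {b. b < p \<and> (int b - int a) mod 5 = i}) = (int p - int a - 1 - i) div 5 - (- int a - 1 - i) div 5"
proof (induction p)
  case 0 then show ?case by simp
next
  case (Suc p)
  note step = div5_step2[OF assms]
  have "{b. b < Suc p \<and> (int b - int a) mod 5 = i} = {b. b < p \<and> (int b - int a) mod 5 = i} \<union> (if (int p - int a) mod 5 = i then {p} else {})"
    by (auto simp: less_Suc_eq)
  then have "int (card {b. b < Suc p \<and> (int b - int a) mod 5 = i}) = int (card {b. b < p \<and> (int b - int a) mod 5 = i}) + (if (int p - int a) mod 5 = i then 1 else 0)"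
    by (auto simp: card_insert_if)
  also have "\<dots> = (int (Suc p) - int a - 1 - i) div 5 - (- int a - 1 - i) div 5"
    using Suc.IH step[of "int p - int a"] by (simp add: algebra_simps)
  finally show ?case .
qed


lemma sum5: "(\<Sum>r<(5::nat). g r) = g 0 + g 1 + g 2 + g 3 + (g 4 :: 'a :: comm_monoid_add)"
  by (simp add: eval_nat_numeral ac_simps)

lemma runner_rcount:
  assumes la: "is_partition la" and run: "runner la c" and i5: "i < 5"
  shows "int (r_count la (int i)) = (\<Sum>r<5. c r * (c r - 1) div 2 + ((int r - int i) div 5) * c r)"
proof -
  define L where "L = length la"
  have set_eq: "{(a, b) \<in> diagram la. (int b - int a) mod 5 = int i} =
      Sigma {..<L} (\<lambda>a. {b. b < pp la a \<and> (int b - int a) mod 5 = int i})"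
    unfolding diagram_def L_def pp_def by auto
  have "int (r_count la (int i)) = (\<Sum>a<L. int (card {b. b < pp la a \<and> (int b - int a) mod 5 = int i}))"
    unfolding r_count_def set_eq by (subst card_SigmaI) auto
  also have "\<dots> = (\<Sum>a<L. (\<lambda>y. (y - int i) div 5) (xx la a) - (\<lambda>y. (y - int i) div 5) (- int a - 1))"
    by (rule sum.cong) (use i5 in \<open>auto simp: row_count5 xx_def algebra_simps\<close>)
  also have "\<dots> = (\<Sum>r<5. (\<lambda>r m. m * (m - 1) div 2 + ((int r - int i) div 5) * m) r (c r)
                      - (\<lambda>r m. m * (m - 1) div 2 + ((int r - int i) div 5) * m) r 0)"
    unfolding L_def
  proof (rule runner_sum[OF la run])
    fix r m
    note div5_lin[of r m i]
    then show "(m + 1) * (m + 1 - 1) div 2 + (int r - int i) div 5 * (m + 1) - (m * (m - 1) div 2 + (int r - int i) div 5 * m) = (int r + 5 * m - int i) div 5"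
      unfolding tri2 by (simp add: algebra_simps)
  qed
  finally show ?thesis by simp
qed

lemma runner_nvec:
  assumes la: "is_partition la" and run: "runner la c" and m5: "m < 5"
  shows "nvec la m = c m"
proof -
  have s0: "c 0 + c 1 + c 2 + c 3 + c 4 = 0" using runner_sum_c[OF la run] by (simp add: sum5)
  have R: "\<And>i. i < 5 \<Longrightarrow> int (r_count la (int i)) = (\<Sum>r<5. c r * (c r - 1) div 2 + ((int r - int i) div 5) * c r)"
    using runner_rcount[OF la run] by blast
  have "m = 0 \<or> m = 1 \<or> m = 2 \<or> m = 3 \<or> m = 4" using m5 by auto
  then show ?thesis
  proof (elim disjE)
    assume "m = 0" then show ?thesis using R[of 0] R[of 1] unfolding nvec_def by (simp add: sum5)
  next
    assume "m = 1" then show ?thesis using R[of 1] R[of 2] unfolding nvec_def by (simp add: sum5)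
  next
    assume "m = 2" then show ?thesis using R[of 2] R[of 3] unfolding nvec_def by (simp add: sum5)
  next
    assume "m = 3" then show ?thesis using R[of 3] R[of 4] unfolding nvec_def by (simp add: sum5)
  next
    assume "m = 4" then show ?thesis using R[of 4] R[of 0] s0 unfolding nvec_def by (simp add: sum5)
  qed
qed

lemma div2_lin: "(k + 2 * x) div 2 = x + k div (2::int)"
  by (metis add.commute div_mult_self1 mult.commute zero_neq_numeral)
lemma mod2_lin: "(k + 2 * x) mod 2 = k mod (2::int)"
  by (metis mod_mult_self2)
lemma mod4_lin: "(k + 4 * x) mod 4 = k mod (4::int)"
  by (metis mod_mult_self2)

lemma row_srank: "((if odd p then 1 else 0) - (if even a then 1 else -1) * p) mod 4 = (2 * ((p - a) div 2 - (- a) div 2)) mod (4::int)"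
  for p a :: int
proof -
  obtain s v where a: "a = 2 * s + v" "v = 0 \<or> v = 1" by (metis odd_two_times_div_two_succ even_two_times_div_two add.right_neutral) 
  obtain t u where p: "p = 2 * t + u" "u = 0 \<or> u = 1" by (metis odd_two_times_div_two_succ even_two_times_div_two add.right_neutral)
  have e1: "p - a = (u - v) + 2 * (t - s)" "- a = - v + 2 * (- s)" using a p by auto
  have R: "(2 * ((p - a) div 2 - (- a) div 2)) = 2 * t + 2 * ((u - v) div 2 - (- v) div 2)"
    unfolding e1 div2_lin by (simp add: algebra_simps)
  have oddp: "odd p \<longleftrightarrow> u = 1" using p by auto
  have evena: "even a \<longleftrightarrow> v = 0" using a by auto
  consider "v = 0" "u = 0" | "v = 0" "u = 1" | "v = 1" "u = 0" | "v = 1" "u = 1" using a(2) p(2) by blast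
  then show ?thesis
  proof cases
    case 1
    have "- (2 * t) = 2 * t + 4 * (- t)" by simp
    then have "(- (2 * t)) mod 4 = (2 * t) mod 4" by (metis mod4_lin)
    then show ?thesis unfolding R using 1 oddp evena p by simp
  next
    case 2
    have "- (2 * t) = 2 * t + 4 * (- t)" by simp
    then have "(- (2 * t)) mod 4 = (2 * t) mod 4" by (metis mod4_lin)
    then show ?thesis unfolding R using 2 oddp evena p by simp
  next
    case 3
    then show ?thesis unfolding R using oddp evena p by simp
  next
    case 4
    then show ?thesis unfolding R using oddp evena p by (simp add: algebra_simps)
  qed
qed

lemma G_step: "(m + 1 + (if even R then 1 else 0)) div 2 - (m + (if even R then 1 else 0)) div 2 = (R + 5 * m + 1) mod (2::int)"
  for m R :: int
proof -
  obtain s v where a: "R = 2 * s + v" "v = 0 \<or> v = 1" by (metis odd_two_times_div_two_succ even_two_times_div_two add.right_neutral) 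
  obtain t u where p: "m = 2 * t + u" "u = 0 \<or> u = 1" by (metis odd_two_times_div_two_succ even_two_times_div_two add.right_neutral)
  have e: "R + 5 * m + 1 = (v + u + 1) + 2 * (s + 5 * t + 2 * u)" using a p by auto
  have e2: "m + 1 + k = (u + 1 + k) + 2 * t" "m + k = (u + k) + 2 * t" for k using p by auto
  have evenR: "even R \<longleftrightarrow> v = 0" using a by auto
  show ?thesis unfolding e e2 div2_lin mod2_lin using a(2) p(2) evenR by auto
qed

lemma alt_sum: "(\<Sum>a<n. (-1::int) ^ a) = (if odd n then 1 else 0)"
  by (induction n) auto

lemma downset_nat:
  fixes S :: "nat set"
  assumes "finite S" "\<And>a b. a \<in> S \<Longrightarrow> b \<le> a \<Longrightarrow> b \<in> S"
  shows "S = {..<card S}"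
proof (cases "S = {}")
  case True then show ?thesis by simp
next
  case False
  define m where "m = Max S"
  have "S = {..m}"
  proof
    show "S \<subseteq> {..m}" unfolding m_def using assms(1) by auto
    show "{..m} \<subseteq> S" unfolding m_def using assms False Max_in by auto
  qed
  then show ?thesis by (simp add: lessThan_Suc_atMost[symmetric])
qed

lemma num_odd_sum:
  "int (num_odd la) = (\<Sum>a<length la. if odd (pp la a) then 1 else 0)"
proof -
  have "(\<Sum>a<length la. (if odd (pp la a) then 1 else 0::int)) = (\<Sum>a<length la. of_bool (odd (la ! a)))"
    by (rule sum.cong) (auto simp: pp_def)
  also have "\<dots> = int (card ({..<length la} \<inter> {a. odd (la ! a)}))" by simp
  also have "{..<length la} \<inter> {a. odd (la ! a)} = {i. i < length la \<and> odd (la ! i)}" by auto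
  finally show ?thesis unfolding num_odd_def length_filter_conv_card by simp
qed

lemma num_odd_conj:
  assumes la: "is_partition la"
  shows "int (num_odd (conjugate la)) = (\<Sum>a<length la. (-1) ^ a * int (pp la a))"
proof -
  define L where "L = length la"
  define P0 where "P0 = pp la 0"
  define n where "n k = card {a. a < L \<and> k < pp la a}" for k
  have hd: "(if la = [] then 0 else hd la) = P0" unfolding P0_def pp_def by (cases la) auto
  have g: "length (filter (\<lambda>x. k < x) la) = n k" for k
    unfolding length_filter_conv_card n_def L_def pp_def by (rule arg_cong[where f=card]) auto
  have conj: "conjugate la = map n [0..<P0]" unfolding conjugate_def hd g by simp
  have "int (num_odd (conjugate la)) = int (card {k. k < P0 \<and> odd (n k)})"
    unfolding num_odd_def conj length_filter_conv_card by (auto intro!: arg_cong[where f=card])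
  also have "\<dots> = (\<Sum>k<P0. of_bool (odd (n k)))"
  proof -
    have "{k. k < P0 \<and> odd (n k)} = {..<P0} \<inter> {k. odd (n k)}" by auto
    then show ?thesis by simp
  qed
  also have "\<dots> = (\<Sum>k<P0. \<Sum>a\<in>{a. a < L \<and> k < pp la a}. (-1::int) ^ a)"
  proof (rule sum.cong)
    fix k assume "k \<in> {..<P0}"
    have "{a. a < L \<and> k < pp la a} = {..<n k}" unfolding n_def
      by (rule downset_nat) (auto intro: less_le_trans part_mono[OF la])
    then show "of_bool (odd (n k)) = (\<Sum>a\<in>{a. a < L \<and> k < pp la a}. (-1::int) ^ a)"
      using alt_sum[of "n k"] by simp
  qed simp
  also have "\<dots> = (\<Sum>k<P0. \<Sum>a\<in>{a \<in> {..<L}. k < pp la a}. (-1::int) ^ a)" by (simp add: Collect_conj_eq lessThan_def)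
  also have "\<dots> = (\<Sum>a<L. \<Sum>k\<in>{k \<in> {..<P0}. k < pp la a}. (-1::int) ^ a)"
    by (rule sum.swap_restrict) auto
  also have "\<dots> = (\<Sum>a<L. (-1) ^ a * int (pp la a))"
  proof (rule sum.cong)
    fix a assume "a \<in> {..<L}"
    have "pp la a \<le> P0" unfolding P0_def using part_mono[OF la] by simp
    then have "{k \<in> {..<P0}. k < pp la a} = {..<pp la a}" by auto
    then show "(\<Sum>k\<in>{k \<in> {..<P0}. k < pp la a}. (-1::int) ^ a) = (-1) ^ a * int (pp la a)" by simp
  qed simp
  finally show ?thesis unfolding L_def .
qed

lemma runner_srank:
  assumes la: "is_partition la" and run: "runner la c"
  shows "srank la mod 4 = (int (sum_list la) - (\<Sum>r<5. (c r + (if even r then 1 else 0)) div 2)) mod 4"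
proof -
  define L where "L = length la"
  have "srank la = (\<Sum>a<L. (if odd (pp la a) then 1 else 0) - (-1) ^ a * int (pp la a))"
    unfolding srank_def num_odd_conj[OF la] num_odd_sum[of la] L_def by (simp add: sum_subtractf)
  then have "srank la mod 4 = (\<Sum>a<L. ((if odd (int (pp la a)) then 1 else 0) - (if even (int a) then 1 else -1) * int (pp la a)) mod 4) mod 4"
    by (simp add: mod_sum_eq minus_one_power_iff)
  also have "\<dots> = (\<Sum>a<L. (2 * ((int (pp la a) - int a) div 2 - (- int a) div 2)) mod 4) mod 4"
    unfolding row_srank ..
  also have "\<dots> = (\<Sum>a<L. 2 * ((int (pp la a) - int a) div 2 - (- int a) div 2)) mod 4"
    by (simp add: mod_sum_eq)
  also have "(\<Sum>a<L. 2 * ((int (pp la a) - int a) div 2 - (- int a) div 2))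
     = (\<Sum>a<L. (\<lambda>y. 2 * ((y + 1) div 2)) (xx la a) - (\<lambda>y. 2 * ((y + 1) div 2)) (- int a - 1))"
    by (rule sum.cong) (auto simp: xx_def algebra_simps)
  also have "\<dots> = (\<Sum>r<5. (\<lambda>r m. (int r + 1) * m + 5 * (m * (m - 1) div 2) - (m + (if even r then 1 else 0)) div 2) r (c r)
          - (\<lambda>r m. (int r + 1) * m + 5 * (m * (m - 1) div 2) - (m + (if even r then 1 else 0)) div 2) r 0)"
    unfolding L_def
  proof (rule runner_sum[OF la run])
    fix r m
    have st: "(m + 1 + (if even (int r) then 1 else 0)) div 2 - (m + (if even (int r) then 1 else 0)) div 2 = (int r + 5 * m + 1) mod 2"
      by (rule G_step)
    have "2 * ((int r + 5 * m + 1) div 2) = (int r + 5 * m + 1) - (int r + 5 * m + 1) mod 2"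
      by (simp add: minus_mod_eq_mult_div)
    then show "(int r + 1) * (m + 1) + 5 * ((m + 1) * (m + 1 - 1) div 2) - (m + 1 + (if even r then 1 else 0)) div 2 -
         ((int r + 1) * m + 5 * (m * (m - 1) div 2) - (m + (if even r then 1 else 0)) div 2) =
         2 * ((int r + 5 * m + 1) div 2)"
      using st unfolding tri2 by (simp add: algebra_simps)
  qed
  also have "\<dots> = (\<Sum>r<5. int r * c r + 5 * (c r * (c r - 1) div 2)) + (\<Sum>r<5. c r) - (\<Sum>r<5. (c r + (if even r then 1 else 0)) div 2)"
    by (simp add: sum.distrib sum_subtractf algebra_simps)
  also have "\<dots> = int (sum_list la) - (\<Sum>r<5. (c r + (if even r then 1 else 0)) div 2)"
    using runner_size[OF la run] runner_sum_c[OF la run] by simp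
  finally show ?thesis .
qed

lemma runner_core:
  assumes la: "is_partition la" and run: "runner la c"
  shows "is_5core la"
  unfolding is_5core_iff
proof (intro conjI allI la)
  fix a
  let ?y = "xx la a"
  have "?y div 5 < c (nat (?y mod 5))" using run unfolding runner_def by blast
  moreover have "(?y - 5) div 5 = ?y div 5 - 1" "(?y - 5) mod 5 = ?y mod 5" by simp_all
  ultimately show "xx la a - 5 \<in> range (xx la)" using run unfolding runner_def by simp
qed

lemma sorted_lb:
  fixes sl :: "int list"
  assumes "sorted_wrt (<) sl" "i < length sl"
  shows "sl ! i \<ge> sl ! 0 + int i"
  using assms(2)
proof (induction i)
  case 0 then show ?case by simp
next
  case (Suc i)
  have "sl ! i < sl ! Suc i" using sorted_wrt_nth_less[OF assms(1), of i "Suc i"] Suc.prems by simp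
  then show ?case using Suc by simp
qed

lemma runner_exists:
  fixes c :: "nat \<Rightarrow> int"
  assumes s0: "(\<Sum>r<5. c r) = 0"
  shows "\<exists>la. is_partition la \<and> runner la c"
proof -
  define K where "K = (\<Sum>r<5. nat (- c r))"
  have hK: "- int K \<le> c r" if "r < 5" for r
  proof -
    have "nat (- c r) \<le> (\<Sum>r<5. nat (- c r))" using that by (intro member_le_sum) auto
    then show ?thesis unfolding K_def by linarith
  qed
  define B where "B = (\<Sum>r<5. nat (c r))"
  have hB: "c r \<le> int B" if "r < 5" for r
  proof -
    have "nat (c r) \<le> (\<Sum>r<5. nat (c r))" using that by (intro member_le_sum) auto
    then show ?thesis unfolding B_def by linarith
  qed
  define L where "L = 5 * K"
  define F where "F = {y. - 5 * int K \<le> y \<and> y div 5 < c (nat (y mod 5))}"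
  have Ffin: "finite F"
  proof -
    have "F \<subseteq> {- 5 * int K ..< 5 * int B}"
    proof
      fix y assume "y \<in> F"
      then have "y div 5 < c (nat (y mod 5))" "- 5 * int K \<le> y" unfolding F_def by auto
      moreover have "nat (y mod 5) < 5" by simp
      ultimately have "y div 5 < int B" using hB by fastforce
      then show "y \<in> {- 5 * int K ..< 5 * int B}" using \<open>- 5 * int K \<le> y\<close> by auto
    qed
    then show ?thesis by (rule finite_subset) simp
  qed
  have "int (card F) = (\<Sum>y\<in>F. (1::int))" by simp
  also have "\<dots> = (\<Sum>r<5. \<Sum>m\<in>{- int K..<c r}. (1::int))"
    unfolding F_def by (rule runner_decomp) (rule hK)
  also have "\<dots> = (\<Sum>r<5. c r + int K)"
  proof (rule sum.cong)
    fix r assume "r \<in> {..<(5::nat)}"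
    then have "- int K \<le> c r" using hK by simp
    then show "(\<Sum>m\<in>{- int K..<c r}. (1::int)) = c r + int K" by simp
  qed simp
  also have "\<dots> = int L" using s0 unfolding L_def by (simp add: sum.distrib)
  finally have cardF: "card F = L" by simp
  define sl where "sl = sorted_list_of_set F"
  have slS: "sorted_wrt (<) sl" unfolding sl_def by (rule strict_sorted_list_of_set)
  have slset: "set sl = F" unfolding sl_def using Ffin by simp
  have sllen: "length sl = L"
    using cardF distinct_card[of sl] unfolding sl_def
    by (metis Ffin distinct_sorted_list_of_set set_sorted_list_of_set)
  define X where "X a = sl ! (L - 1 - a)" for a
  have Xdec: "X (Suc a) < X a" if "Suc a < L" for a
    unfolding X_def using sorted_wrt_nth_less[OF slS, of "L - 1 - Suc a" "L - 1 - a"] that sllen by simp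
  have Xlb: "X a \<ge> - int a - 1" if "a < L" for a
  proof -
    have "sl ! 0 \<in> F" using slset sllen that by (metis gr_zeroI less_zeroE nth_mem)
    then have "sl ! 0 \<ge> - int L" unfolding F_def L_def by simp
    moreover have "sl ! (L - 1 - a) \<ge> sl ! 0 + int (L - 1 - a)" using sorted_lb[OF slS, of "L - 1 - a"] that sllen by linarith
    ultimately show ?thesis unfolding X_def using that by linarith
  qed
  define q where "q a = (if a < L then nat (X a + int a + 1) else 0)" for a
  have qdec: "q (Suc a) \<le> q a" for a
  proof (cases "Suc a < L")
    case True then show ?thesis using Xdec[OF True] Xlb[of "Suc a"] unfolding q_def by simp
  next
    case False then show ?thesis unfolding q_def by simp
  qed
  have "q L = 0" unfolding q_def by simp
  then obtain mu where mu: "is_partition mu" and pq: "\<And>r. pp mu r = q r"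
    using mk_partition[of q, OF qdec] by blast
  have xmu: "xx mu a = (if a < L then X a else - int a - 1)" for a
    unfolding xx_def pq q_def using Xlb[of a] by force
  have "runner mu c" unfolding runner_def
  proof
    fix y
    show "y \<in> range (xx mu) \<longleftrightarrow> y div 5 < c (nat (y mod 5))"
    proof
      assume "y \<in> range (xx mu)"
      then obtain a where a: "y = xx mu a" by auto
      show "y div 5 < c (nat (y mod 5))"
      proof (cases "a < L")
        case True
        then have "y \<in> set sl" using a xmu sllen unfolding X_def by simp
        then show ?thesis using slset unfolding F_def by auto
      next
        case False
        then have "y div 5 < - int K" using a xmu unfolding L_def by simp
        moreover have "nat (y mod 5) < 5" by simp
        ultimately show ?thesis using hK[of "nat (y mod 5)"] by linarith
      qed
    next
      assume h: "y div 5 < c (nat (y mod 5))"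
      show "y \<in> range (xx mu)"
      proof (cases "y \<ge> - int L")
        case True
        then have "y \<in> set sl" using h slset unfolding F_def L_def by simp
        then obtain i where i: "i < L" "sl ! i = y" using sllen by (metis in_set_conv_nth)
        have "xx mu (L - 1 - i) = y" using xmu i unfolding X_def by simp
        then show ?thesis by (metis rangeI)
      next
        case False
        then have "\<not> nat (- y - 1) < L" by simp
        then have "xx mu (nat (- y - 1)) = y" using xmu[of "nat (- y - 1)"] False by simp
        then show ?thesis by (metis rangeI)
      qed
    qed
  qed
  then show ?thesis using mu by blast
qed

type_synonym v4 = "int \<times> int \<times> int \<times> int"

definition NN :: "v4 \<Rightarrow> int" where
  "NN v = (case v of (a, b, c, d) \<Rightarrow> 2 * (- 4 * a - 3 * b - 2 * c - d) +
     5 * (a * (a - 1) + b * (b - 1) + c * (c - 1) + d * (d - 1) + (a + b + c + d) * (a + b + c + d + 1)))"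

definition SRx :: "v4 \<Rightarrow> int" where
  "SRx v = (case v of (a, b, c, d) \<Rightarrow> (a + 1) div 2 + b div 2 + (c + 1) div 2 + d div 2 + (1 - (a + b + c + d)) div 2)"

definition Cr :: "v4 \<Rightarrow> int" where
  "Cr v = (case v of (a, b, c, d) \<Rightarrow> (2 * (1 + a - b - c + d)) mod 5)"

definition bits :: "v4 \<Rightarrow> int" where
  "bits v = (case v of (a, b, c, d) \<Rightarrow> of_bool (odd (a + 1)) + of_bool (odd b) + of_bool (odd (c + 1)) + of_bool (odd d)
      + of_bool (odd (1 - (a + b + c + d))))"

lemma two_div2: "2 * (x div 2) = x - of_bool (odd x)" for x :: int
  by (metis add_diff_cancel_right' minus_mod_eq_mult_div mult.commute odd_iff_mod_2_eq_one of_bool_eq(1) of_bool_eq(2) parity_cases)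

lemma SRx_bits: "2 * SRx v = 3 - bits v"
proof -
  obtain a b c d where v: "v = (a, b, c, d)" by (metis prod.exhaust)
  show ?thesis unfolding v SRx_def bits_def prod.case distrib_left two_div2 by simp
qed

lemma v4_cases: obtains a b c d where "v = (a, b, c, d)" by (metis prod.exhaust)

definition phi0 :: "int \<times> int \<times> int \<times> int \<Rightarrow> int \<times> int \<times> int \<times> int" where
  "phi0 v = (case v of (a, b, c, d) \<Rightarrow> (- 2 * a - 2 * c - d + 1, - a - b + c + d + 1, - 2 * b - c - 2 * d, a + 2 * b + 2 * c - 1))"

definition psi0 :: "int \<times> int \<times> int \<times> int \<Rightarrow> int \<times> int \<times> int \<times> int" where
  "psi0 v = (case v of (a, b, c, d) \<Rightarrow> ((- 2 * a - 2 * b - d + 3) div 5, (a - b - c + d + 1) div 5, (2 * b + c + 2 * d) div 5, (- a - 2 * c - 2 * d - 1) div 5))"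

definition phi1 :: "int \<times> int \<times> int \<times> int \<Rightarrow> int \<times> int \<times> int \<times> int" where
  "phi1 v = (case v of (a, b, c, d) \<Rightarrow> (- 2 * a - b - 2 * d + 1, 2 * a + 2 * b + c - 1, a + 2 * c + 2 * d, - 2 * b - 2 * c - d))"

definition psi1 :: "int \<times> int \<times> int \<times> int \<Rightarrow> int \<times> int \<times> int \<times> int" where
  "psi1 v = (case v of (a, b, c, d) \<Rightarrow> ((2 * b + c + 2 * d + 2) div 5, (- a - 2 * c - 2 * d + 1) div 5, (2 * a + b + 2 * c - 1) div 5, (- 2 * a - 2 * b - d) div 5))"

definition phi2 :: "int \<times> int \<times> int \<times> int \<Rightarrow> int \<times> int \<times> int \<times> int" where
  "phi2 v = (case v of (a, b, c, d) \<Rightarrow> (a - b + c - d, - a - 2 * b - 2 * c + 1, 2 * a + 2 * b + d - 1, b + 2 * c + 2 * d))"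

definition psi2 :: "int \<times> int \<times> int \<times> int \<Rightarrow> int \<times> int \<times> int \<times> int" where
  "psi2 v = (case v of (a, b, c, d) \<Rightarrow> ((2 * a + b + 2 * c + 1) div 5, (- 2 * a - 2 * b - d + 2) div 5, (a - b - c + d) div 5, (2 * b + c + 2 * d - 1) div 5))"

definition phi3 :: "int \<times> int \<times> int \<times> int \<Rightarrow> int \<times> int \<times> int \<times> int" where
  "phi3 v = (case v of (a, b, c, d) \<Rightarrow> (2 * a + c + 2 * d, 2 * b + 2 * c + d, - 2 * a - b - 2 * c + 1, a + b - c - d - 1))"

definition psi3 :: "int \<times> int \<times> int \<times> int \<Rightarrow> int \<times> int \<times> int \<times> int" where
  "psi3 v = (case v of (a, b, c, d) \<Rightarrow> ((a - b - c + d + 2) div 5, (2 * b + c + 2 * d + 1) div 5, (- a - 2 * c - 2 * d) div 5, (2 * a + b + 2 * c - 2) div 5))"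

definition phi4 :: "int \<times> int \<times> int \<times> int \<Rightarrow> int \<times> int \<times> int \<times> int" where
  "phi4 v = (case v of (a, b, c, d) \<Rightarrow> (a + 2 * b + 2 * d, - b - 2 * c - 2 * d, - a + b + c - d, - 2 * a - 2 * b - c + 1))"

definition psi4 :: "int \<times> int \<times> int \<times> int \<Rightarrow> int \<times> int \<times> int \<times> int" where
  "psi4 v = (case v of (a, b, c, d) \<Rightarrow> ((- a - 2 * c - 2 * d + 2) div 5, (2 * a + b + 2 * c) div 5, (- 2 * a - 2 * b - d + 1) div 5, (a - b - c + d - 1) div 5))"

lemma NN_phi0: "NN (phi0 v) = 5 * NN v + 8"
proof -
  obtain a b c d where v: "v = (a, b, c, d)" by (rule v4_cases)
  show ?thesis unfolding v NN_def phi0_def prod.case by (simp add: algebra_simps)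
qed

lemma Cr_phi0: "Cr (phi0 v) = 0"
proof -
  obtain a b c d where v: "v = (a, b, c, d)" by (rule v4_cases)
  have h: "2 * (1 + (- 2 * a - 2 * c - d + 1) - (- a - b + c + d + 1) - (- 2 * b - c - 2 * d) + (a + 2 * b + 2 * c - 1)) = 0 + (2 * b) * 5" by (simp add: algebra_simps)
  have "(2 * (1 + (- 2 * a - 2 * c - d + 1) - (- a - b + c + d + 1) - (- 2 * b - c - 2 * d) + (a + 2 * b + 2 * c - 1))) mod 5 = 0" unfolding h mod_mult_self1 by simp
  then show ?thesis unfolding v Cr_def phi0_def prod.case .
qed

lemma bits_phi0: "bits (phi0 v) = bits v"
proof -
  obtain a b c d where v: "v = (a, b, c, d)" by (rule v4_cases)
  show ?thesis unfolding v bits_def phi0_def prod.case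
    by (cases "even a"; cases "even b"; cases "even c"; cases "even d"; simp)
qed

lemma SRx_phi0: "SRx (phi0 v) = SRx v"
  using SRx_bits[of "phi0 v"] SRx_bits[of v] bits_phi0[of v] by simp

lemma psi_phi0: "psi0 (phi0 v) = v"
proof -
  obtain a b c d where v: "v = (a, b, c, d)" by (rule v4_cases)
  show ?thesis unfolding v psi0_def phi0_def prod.case by (simp add: algebra_simps)
qed

lemma phi_psi0:
  assumes "NN w = 2 * (5 * int n + 4)" "Cr w = 0"
  shows "phi0 (psi0 w) = w"
proof -
  obtain a b c d where w: "w = (a, b, c, d)" by (rule v4_cases)
  define Q where "Q = a * (a - 1) + b * (b - 1) + c * (c - 1) + d * (d - 1) + (a + b + c + d) * (a + b + c + d + 1)"
  define t where "t = 2 * int n + 1 - Q"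
  define s where "s = (2 * (1 + a - b - c + d)) div 5"
  have h1: "2 * (- 4 * a - 3 * b - 2 * c - d) = 3 + 5 * t"
  proof -
    have "2 * (- 4 * a - 3 * b - 2 * c - d) + 5 * Q = 2 * (5 * int n + 4)"
      using assms(1) unfolding w NN_def prod.case Q_def .
    then show ?thesis unfolding t_def by (simp add: algebra_simps)
  qed
  have "(2 * (1 + a - b - c + d)) mod 5 = 0" using assms(2) unfolding w Cr_def by simp
  then have h2: "2 * (1 + a - b - c + d) = 0 + 5 * s" unfolding s_def by (metis div_mult_mod_eq add.commute mult.commute)
  have h1': "2 * (- 4 * a - 3 * b - 2 * c - d) - 3 - 5 * t = 0" using h1 by simp
  have h2': "2 * (1 + a - b - c + d) - 0 - 5 * s = 0" using h2 by simp
  have "- 2 * a - 2 * b - d + 3 = 5 * ((2 * b + 2 * c - d) + 1 * t + 3 * s) + 1 * (2 * (- 4 * a - 3 * b - 2 * c - d) - 3 - 5 * t) + 3 * (2 * (1 + a - b - c + d) - 0 - 5 * s)"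
    by (simp add: algebra_simps)
  then have x0: "- 2 * a - 2 * b - d + 3 = 5 * ((2 * b + 2 * c - d) + 1 * t + 3 * s)" by (simp only: h1' h2' mult_zero_right mult_zero_left add_0_right)
  define y0 where "y0 = (- 2 * a - 2 * b - d + 3) div 5"
  have y0: "5 * y0 = - 2 * a - 2 * b - d + 3" unfolding y0_def x0 by simp
  have "a - b - c + d + 1 = 5 * ((- a + b + c - d - 1) + 0 * t + 3 * s) + 0 * (2 * (- 4 * a - 3 * b - 2 * c - d) - 3 - 5 * t) + 3 * (2 * (1 + a - b - c + d) - 0 - 5 * s)"
    by (simp add: algebra_simps)
  then have x1: "a - b - c + d + 1 = 5 * ((- a + b + c - d - 1) + 0 * t + 3 * s)" by (simp only: h1' h2' mult_zero_right mult_zero_left add_0_right)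
  define y1 where "y1 = (a - b - c + d + 1) div 5"
  have y1: "5 * y1 = a - b - c + d + 1" unfolding y1_def x1 by simp
  have "2 * b + c + 2 * d = 5 * ((2 * a + 4 * b + 3 * c) + 2 * t + 3 * s) + 2 * (2 * (- 4 * a - 3 * b - 2 * c - d) - 3 - 5 * t) + 3 * (2 * (1 + a - b - c + d) - 0 - 5 * s)"
    by (simp add: algebra_simps)
  then have x2: "2 * b + c + 2 * d = 5 * ((2 * a + 4 * b + 3 * c) + 2 * t + 3 * s)" by (simp only: h1' h2' mult_zero_right mult_zero_left add_0_right)
  define y2 where "y2 = (2 * b + c + 2 * d) div 5"
  have y2: "5 * y2 = 2 * b + c + 2 * d" unfolding y2_def x2 by simp
  have "- a - 2 * c - 2 * d - 1 = 5 * ((5 * a + 6 * b + 4 * c + 1) + 4 * t + 3 * s) + 4 * (2 * (- 4 * a - 3 * b - 2 * c - d) - 3 - 5 * t) + 3 * (2 * (1 + a - b - c + d) - 0 - 5 * s)"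
    by (simp add: algebra_simps)
  then have x3: "- a - 2 * c - 2 * d - 1 = 5 * ((5 * a + 6 * b + 4 * c + 1) + 4 * t + 3 * s)" by (simp only: h1' h2' mult_zero_right mult_zero_left add_0_right)
  define y3 where "y3 = (- a - 2 * c - 2 * d - 1) div 5"
  have y3: "5 * y3 = - a - 2 * c - 2 * d - 1" unfolding y3_def x3 by simp
  have pw: "psi0 w = (y0, y1, y2, y3)" unfolding w psi0_def prod.case y0_def y1_def y2_def y3_def ..
  have "5 * (- 2 * y0 - 2 * y2 - y3 + 1) = (-2) * (5 * y0) + (0) * (5 * y1) + (-2) * (5 * y2) + (-1) * (5 * y3) + 5 * (1)" by (simp add: algebra_simps)
  also have "\<dots> = (-2) * (- 2 * a - 2 * b - d + 3) + (0) * (a - b - c + d + 1) + (-2) * (2 * b + c + 2 * d) + (-1) * (- a - 2 * c - 2 * d - 1) + 5 * (1)" by (simp only: y0 y1 y2 y3)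
  also have "\<dots> = 5 * a" by (simp add: algebra_simps)
  finally have f0: "- 2 * y0 - 2 * y2 - y3 + 1 = a" by simp
  have "5 * (- y0 - y1 + y2 + y3 + 1) = (-1) * (5 * y0) + (-1) * (5 * y1) + (1) * (5 * y2) + (1) * (5 * y3) + 5 * (1)" by (simp add: algebra_simps)
  also have "\<dots> = (-1) * (- 2 * a - 2 * b - d + 3) + (-1) * (a - b - c + d + 1) + (1) * (2 * b + c + 2 * d) + (1) * (- a - 2 * c - 2 * d - 1) + 5 * (1)" by (simp only: y0 y1 y2 y3)
  also have "\<dots> = 5 * b" by (simp add: algebra_simps)
  finally have f1: "- y0 - y1 + y2 + y3 + 1 = b" by simp
  have "5 * (- 2 * y1 - y2 - 2 * y3) = (0) * (5 * y0) + (-2) * (5 * y1) + (-1) * (5 * y2) + (-2) * (5 * y3) + 5 * (0)" by (simp add: algebra_simps)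
  also have "\<dots> = (0) * (- 2 * a - 2 * b - d + 3) + (-2) * (a - b - c + d + 1) + (-1) * (2 * b + c + 2 * d) + (-2) * (- a - 2 * c - 2 * d - 1) + 5 * (0)" by (simp only: y0 y1 y2 y3)
  also have "\<dots> = 5 * c" by (simp add: algebra_simps)
  finally have f2: "- 2 * y1 - y2 - 2 * y3 = c" by simp
  have "5 * (y0 + 2 * y1 + 2 * y2 - 1) = (1) * (5 * y0) + (2) * (5 * y1) + (2) * (5 * y2) + (0) * (5 * y3) + 5 * (-1)" by (simp add: algebra_simps)
  also have "\<dots> = (1) * (- 2 * a - 2 * b - d + 3) + (2) * (a - b - c + d + 1) + (2) * (2 * b + c + 2 * d) + (0) * (- a - 2 * c - 2 * d - 1) + 5 * (-1)" by (simp only: y0 y1 y2 y3)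
  also have "\<dots> = 5 * d" by (simp add: algebra_simps)
  finally have f3: "y0 + 2 * y1 + 2 * y2 - 1 = d" by simp
  have py: "phi0 (y0, y1, y2, y3) = (a, b, c, d)" unfolding phi0_def prod.case
    using f0 f1 f2 f3 by simp
  show ?thesis using pw py w by simp
qed

lemma bij_phi0:
  "bij_betw phi0 {v. NN v = 2 * int n \<and> (int n - SRx v) mod 4 = i}
     {v. NN v = 2 * (5 * int n + 4) \<and> (5 * int n + 4 - SRx v) mod 4 = i \<and> Cr v = 0}"
proof (rule bij_betw_byWitness[where f'=psi0])
  show "\<forall>v\<in>{v. NN v = 2 * int n \<and> (int n - SRx v) mod 4 = i}. psi0 (phi0 v) = v"
    using psi_phi0 by blast
  show "\<forall>w\<in>{v. NN v = 2 * (5 * int n + 4) \<and> (5 * int n + 4 - SRx v) mod 4 = i \<and> Cr v = 0}. phi0 (psi0 w) = w"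
    using phi_psi0 by blast
  show "phi0 ` {v. NN v = 2 * int n \<and> (int n - SRx v) mod 4 = i}
    \<subseteq> {v. NN v = 2 * (5 * int n + 4) \<and> (5 * int n + 4 - SRx v) mod 4 = i \<and> Cr v = 0}"
  proof
    fix w assume "w \<in> phi0 ` {v. NN v = 2 * int n \<and> (int n - SRx v) mod 4 = i}"
    then obtain v where v: "w = phi0 v" "NN v = 2 * int n" "(int n - SRx v) mod 4 = i" by auto
    have "(5 * int n + 4 - SRx v) mod 4 = (int n - SRx v + 4 * (int n + 1)) mod 4" by (simp add: algebra_simps)
    also have "\<dots> = i" using v(3) by (metis mod_mult_self2)
    finally show "w \<in> {v. NN v = 2 * (5 * int n + 4) \<and> (5 * int n + 4 - SRx v) mod 4 = i \<and> Cr v = 0}"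
      using v NN_phi0[of v] SRx_phi0[of v] Cr_phi0[of v] by simp
  qed
  show "psi0 ` {v. NN v = 2 * (5 * int n + 4) \<and> (5 * int n + 4 - SRx v) mod 4 = i \<and> Cr v = 0}
    \<subseteq> {v. NN v = 2 * int n \<and> (int n - SRx v) mod 4 = i}"
  proof
    fix v assume "v \<in> psi0 ` {v. NN v = 2 * (5 * int n + 4) \<and> (5 * int n + 4 - SRx v) mod 4 = i \<and> Cr v = 0}"
    then obtain w where w: "v = psi0 w" "NN w = 2 * (5 * int n + 4)" "(5 * int n + 4 - SRx w) mod 4 = i" "Cr w = 0" by auto
    have pw: "phi0 v = w" using phi_psi0[OF w(2) w(4)] w(1) by simp
    have "NN v = 2 * int n" using NN_phi0[of v] pw w(2) by simp
    moreover have "SRx v = SRx w" using SRx_phi0[of v] pw by simp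
    moreover have "(int n - SRx w) mod 4 = i"
    proof -
      have "(int n - SRx w) mod 4 = (5 * int n + 4 - SRx w + 4 * (- int n - 1)) mod 4" by (simp add: algebra_simps)
      also have "\<dots> = i" using w(3) by (metis mod_mult_self2)
      finally show ?thesis .
    qed
    ultimately show "v \<in> {v. NN v = 2 * int n \<and> (int n - SRx v) mod 4 = i}" by simp
  qed
qed

lemma NN_phi1: "NN (phi1 v) = 5 * NN v + 8"
proof -
  obtain a b c d where v: "v = (a, b, c, d)" by (rule v4_cases)
  show ?thesis unfolding v NN_def phi1_def prod.case by (simp add: algebra_simps)
qed

lemma Cr_phi1: "Cr (phi1 v) = 1"
proof -
  obtain a b c d where v: "v = (a, b, c, d)" by (rule v4_cases)
  have h: "2 * (1 + (- 2 * a - b - 2 * d + 1) - (2 * a + 2 * b + c - 1) - (a + 2 * c + 2 * d) + (- 2 * b - 2 * c - d)) = 1 + (- 2 * a - 2 * b - 2 * c - 2 * d + 1) * 5" by (simp add: algebra_simps)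
  have "(2 * (1 + (- 2 * a - b - 2 * d + 1) - (2 * a + 2 * b + c - 1) - (a + 2 * c + 2 * d) + (- 2 * b - 2 * c - d))) mod 5 = 1" unfolding h mod_mult_self1 by simp
  then show ?thesis unfolding v Cr_def phi1_def prod.case .
qed

lemma bits_phi1: "bits (phi1 v) = bits v"
proof -
  obtain a b c d where v: "v = (a, b, c, d)" by (rule v4_cases)
  show ?thesis unfolding v bits_def phi1_def prod.case
    by (cases "even a"; cases "even b"; cases "even c"; cases "even d"; simp)
qed

lemma SRx_phi1: "SRx (phi1 v) = SRx v"
  using SRx_bits[of "phi1 v"] SRx_bits[of v] bits_phi1[of v] by simp

lemma psi_phi1: "psi1 (phi1 v) = v"
proof -
  obtain a b c d where v: "v = (a, b, c, d)" by (rule v4_cases)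
  show ?thesis unfolding v psi1_def phi1_def prod.case by (simp add: algebra_simps)
qed

lemma phi_psi1:
  assumes "NN w = 2 * (5 * int n + 4)" "Cr w = 1"
  shows "phi1 (psi1 w) = w"
proof -
  obtain a b c d where w: "w = (a, b, c, d)" by (rule v4_cases)
  define Q where "Q = a * (a - 1) + b * (b - 1) + c * (c - 1) + d * (d - 1) + (a + b + c + d) * (a + b + c + d + 1)"
  define t where "t = 2 * int n + 1 - Q"
  define s where "s = (2 * (1 + a - b - c + d)) div 5"
  have h1: "2 * (- 4 * a - 3 * b - 2 * c - d) = 3 + 5 * t"
  proof -
    have "2 * (- 4 * a - 3 * b - 2 * c - d) + 5 * Q = 2 * (5 * int n + 4)"
      using assms(1) unfolding w NN_def prod.case Q_def .
    then show ?thesis unfolding t_def by (simp add: algebra_simps)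
  qed
  have "(2 * (1 + a - b - c + d)) mod 5 = 1" using assms(2) unfolding w Cr_def by simp
  then have h2: "2 * (1 + a - b - c + d) = 1 + 5 * s" unfolding s_def by (metis div_mult_mod_eq add.commute mult.commute)
  have h1': "2 * (- 4 * a - 3 * b - 2 * c - d) - 3 - 5 * t = 0" using h1 by simp
  have h2': "2 * (1 + a - b - c + d) - 1 - 5 * s = 0" using h2 by simp
  have "2 * b + c + 2 * d + 2 = 5 * ((2 * a + 4 * b + 3 * c + 1) + 2 * t + 3 * s) + 2 * (2 * (- 4 * a - 3 * b - 2 * c - d) - 3 - 5 * t) + 3 * (2 * (1 + a - b - c + d) - 1 - 5 * s)"
    by (simp add: algebra_simps)
  then have x0: "2 * b + c + 2 * d + 2 = 5 * ((2 * a + 4 * b + 3 * c + 1) + 2 * t + 3 * s)" by (simp only: h1' h2' mult_zero_right mult_zero_left add_0_right)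
  define y0 where "y0 = (2 * b + c + 2 * d + 2) div 5"
  have y0: "5 * y0 = 2 * b + c + 2 * d + 2" unfolding y0_def x0 by simp
  have "- a - 2 * c - 2 * d + 1 = 5 * ((5 * a + 6 * b + 4 * c + 2) + 4 * t + 3 * s) + 4 * (2 * (- 4 * a - 3 * b - 2 * c - d) - 3 - 5 * t) + 3 * (2 * (1 + a - b - c + d) - 1 - 5 * s)"
    by (simp add: algebra_simps)
  then have x1: "- a - 2 * c - 2 * d + 1 = 5 * ((5 * a + 6 * b + 4 * c + 2) + 4 * t + 3 * s)" by (simp only: h1' h2' mult_zero_right mult_zero_left add_0_right)
  define y1 where "y1 = (- a - 2 * c - 2 * d + 1) div 5"
  have y1: "5 * y1 = - a - 2 * c - 2 * d + 1" unfolding y1_def x1 by simp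
  have "2 * a + b + 2 * c - 1 = 5 * ((4 * a + 5 * b + 4 * c + 1) + 3 * t + 3 * s) + 3 * (2 * (- 4 * a - 3 * b - 2 * c - d) - 3 - 5 * t) + 3 * (2 * (1 + a - b - c + d) - 1 - 5 * s)"
    by (simp add: algebra_simps)
  then have x2: "2 * a + b + 2 * c - 1 = 5 * ((4 * a + 5 * b + 4 * c + 1) + 3 * t + 3 * s)" by (simp only: h1' h2' mult_zero_right mult_zero_left add_0_right)
  define y2 where "y2 = (2 * a + b + 2 * c - 1) div 5"
  have y2: "5 * y2 = 2 * a + b + 2 * c - 1" unfolding y2_def x2 by simp
  have "- 2 * a - 2 * b - d = 5 * ((2 * b + 2 * c - d) + 1 * t + 3 * s) + 1 * (2 * (- 4 * a - 3 * b - 2 * c - d) - 3 - 5 * t) + 3 * (2 * (1 + a - b - c + d) - 1 - 5 * s)"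
    by (simp add: algebra_simps)
  then have x3: "- 2 * a - 2 * b - d = 5 * ((2 * b + 2 * c - d) + 1 * t + 3 * s)" by (simp only: h1' h2' mult_zero_right mult_zero_left add_0_right)
  define y3 where "y3 = (- 2 * a - 2 * b - d) div 5"
  have y3: "5 * y3 = - 2 * a - 2 * b - d" unfolding y3_def x3 by simp
  have pw: "psi1 w = (y0, y1, y2, y3)" unfolding w psi1_def prod.case y0_def y1_def y2_def y3_def ..
  have "5 * (- 2 * y0 - y1 - 2 * y3 + 1) = (-2) * (5 * y0) + (-1) * (5 * y1) + (0) * (5 * y2) + (-2) * (5 * y3) + 5 * (1)" by (simp add: algebra_simps)
  also have "\<dots> = (-2) * (2 * b + c + 2 * d + 2) + (-1) * (- a - 2 * c - 2 * d + 1) + (0) * (2 * a + b + 2 * c - 1) + (-2) * (- 2 * a - 2 * b - d) + 5 * (1)" by (simp only: y0 y1 y2 y3)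
  also have "\<dots> = 5 * a" by (simp add: algebra_simps)
  finally have f0: "- 2 * y0 - y1 - 2 * y3 + 1 = a" by simp
  have "5 * (2 * y0 + 2 * y1 + y2 - 1) = (2) * (5 * y0) + (2) * (5 * y1) + (1) * (5 * y2) + (0) * (5 * y3) + 5 * (-1)" by (simp add: algebra_simps)
  also have "\<dots> = (2) * (2 * b + c + 2 * d + 2) + (2) * (- a - 2 * c - 2 * d + 1) + (1) * (2 * a + b + 2 * c - 1) + (0) * (- 2 * a - 2 * b - d) + 5 * (-1)" by (simp only: y0 y1 y2 y3)
  also have "\<dots> = 5 * b" by (simp add: algebra_simps)
  finally have f1: "2 * y0 + 2 * y1 + y2 - 1 = b" by simp
  have "5 * (y0 + 2 * y2 + 2 * y3) = (1) * (5 * y0) + (0) * (5 * y1) + (2) * (5 * y2) + (2) * (5 * y3) + 5 * (0)" by (simp add: algebra_simps)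
  also have "\<dots> = (1) * (2 * b + c + 2 * d + 2) + (0) * (- a - 2 * c - 2 * d + 1) + (2) * (2 * a + b + 2 * c - 1) + (2) * (- 2 * a - 2 * b - d) + 5 * (0)" by (simp only: y0 y1 y2 y3)
  also have "\<dots> = 5 * c" by (simp add: algebra_simps)
  finally have f2: "y0 + 2 * y2 + 2 * y3 = c" by simp
  have "5 * (- 2 * y1 - 2 * y2 - y3) = (0) * (5 * y0) + (-2) * (5 * y1) + (-2) * (5 * y2) + (-1) * (5 * y3) + 5 * (0)" by (simp add: algebra_simps)
  also have "\<dots> = (0) * (2 * b + c + 2 * d + 2) + (-2) * (- a - 2 * c - 2 * d + 1) + (-2) * (2 * a + b + 2 * c - 1) + (-1) * (- 2 * a - 2 * b - d) + 5 * (0)" by (simp only: y0 y1 y2 y3)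
  also have "\<dots> = 5 * d" by (simp add: algebra_simps)
  finally have f3: "- 2 * y1 - 2 * y2 - y3 = d" by simp
  have py: "phi1 (y0, y1, y2, y3) = (a, b, c, d)" unfolding phi1_def prod.case
    using f0 f1 f2 f3 by simp
  show ?thesis using pw py w by simp
qed

lemma bij_phi1:
  "bij_betw phi1 {v. NN v = 2 * int n \<and> (int n - SRx v) mod 4 = i}
     {v. NN v = 2 * (5 * int n + 4) \<and> (5 * int n + 4 - SRx v) mod 4 = i \<and> Cr v = 1}"
proof (rule bij_betw_byWitness[where f'=psi1])
  show "\<forall>v\<in>{v. NN v = 2 * int n \<and> (int n - SRx v) mod 4 = i}. psi1 (phi1 v) = v"
    using psi_phi1 by blast
  show "\<forall>w\<in>{v. NN v = 2 * (5 * int n + 4) \<and> (5 * int n + 4 - SRx v) mod 4 = i \<and> Cr v = 1}. phi1 (psi1 w) = w"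
    using phi_psi1 by blast
  show "phi1 ` {v. NN v = 2 * int n \<and> (int n - SRx v) mod 4 = i}
    \<subseteq> {v. NN v = 2 * (5 * int n + 4) \<and> (5 * int n + 4 - SRx v) mod 4 = i \<and> Cr v = 1}"
  proof
    fix w assume "w \<in> phi1 ` {v. NN v = 2 * int n \<and> (int n - SRx v) mod 4 = i}"
    then obtain v where v: "w = phi1 v" "NN v = 2 * int n" "(int n - SRx v) mod 4 = i" by auto
    have "(5 * int n + 4 - SRx v) mod 4 = (int n - SRx v + 4 * (int n + 1)) mod 4" by (simp add: algebra_simps)
    also have "\<dots> = i" using v(3) by (metis mod_mult_self2)
    finally show "w \<in> {v. NN v = 2 * (5 * int n + 4) \<and> (5 * int n + 4 - SRx v) mod 4 = i \<and> Cr v = 1}"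
      using v NN_phi1[of v] SRx_phi1[of v] Cr_phi1[of v] by simp
  qed
  show "psi1 ` {v. NN v = 2 * (5 * int n + 4) \<and> (5 * int n + 4 - SRx v) mod 4 = i \<and> Cr v = 1}
    \<subseteq> {v. NN v = 2 * int n \<and> (int n - SRx v) mod 4 = i}"
  proof
    fix v assume "v \<in> psi1 ` {v. NN v = 2 * (5 * int n + 4) \<and> (5 * int n + 4 - SRx v) mod 4 = i \<and> Cr v = 1}"
    then obtain w where w: "v = psi1 w" "NN w = 2 * (5 * int n + 4)" "(5 * int n + 4 - SRx w) mod 4 = i" "Cr w = 1" by auto
    have pw: "phi1 v = w" using phi_psi1[OF w(2) w(4)] w(1) by simp
    have "NN v = 2 * int n" using NN_phi1[of v] pw w(2) by simp
    moreover have "SRx v = SRx w" using SRx_phi1[of v] pw by simp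
    moreover have "(int n - SRx w) mod 4 = i"
    proof -
      have "(int n - SRx w) mod 4 = (5 * int n + 4 - SRx w + 4 * (- int n - 1)) mod 4" by (simp add: algebra_simps)
      also have "\<dots> = i" using w(3) by (metis mod_mult_self2)
      finally show ?thesis .
    qed
    ultimately show "v \<in> {v. NN v = 2 * int n \<and> (int n - SRx v) mod 4 = i}" by simp
  qed
qed

lemma NN_phi2: "NN (phi2 v) = 5 * NN v + 8"
proof -
  obtain a b c d where v: "v = (a, b, c, d)" by (rule v4_cases)
  show ?thesis unfolding v NN_def phi2_def prod.case by (simp add: algebra_simps)
qed

lemma Cr_phi2: "Cr (phi2 v) = 2"
proof -
  obtain a b c d where v: "v = (a, b, c, d)" by (rule v4_cases)
  have h: "2 * (1 + (a - b + c - d) - (- a - 2 * b - 2 * c + 1) - (2 * a + 2 * b + d - 1) + (b + 2 * c + 2 * d)) = 2 + (2 * c) * 5" by (simp add: algebra_simps)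
  have "(2 * (1 + (a - b + c - d) - (- a - 2 * b - 2 * c + 1) - (2 * a + 2 * b + d - 1) + (b + 2 * c + 2 * d))) mod 5 = 2" unfolding h mod_mult_self1 by simp
  then show ?thesis unfolding v Cr_def phi2_def prod.case .
qed

lemma bits_phi2: "bits (phi2 v) = bits v"
proof -
  obtain a b c d where v: "v = (a, b, c, d)" by (rule v4_cases)
  show ?thesis unfolding v bits_def phi2_def prod.case
    by (cases "even a"; cases "even b"; cases "even c"; cases "even d"; simp)
qed

lemma SRx_phi2: "SRx (phi2 v) = SRx v"
  using SRx_bits[of "phi2 v"] SRx_bits[of v] bits_phi2[of v] by simp

lemma psi_phi2: "psi2 (phi2 v) = v"
proof -
  obtain a b c d where v: "v = (a, b, c, d)" by (rule v4_cases)
  show ?thesis unfolding v psi2_def phi2_def prod.case by (simp add: algebra_simps)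
qed

lemma phi_psi2:
  assumes "NN w = 2 * (5 * int n + 4)" "Cr w = 2"
  shows "phi2 (psi2 w) = w"
proof -
  obtain a b c d where w: "w = (a, b, c, d)" by (rule v4_cases)
  define Q where "Q = a * (a - 1) + b * (b - 1) + c * (c - 1) + d * (d - 1) + (a + b + c + d) * (a + b + c + d + 1)"
  define t where "t = 2 * int n + 1 - Q"
  define s where "s = (2 * (1 + a - b - c + d)) div 5"
  have h1: "2 * (- 4 * a - 3 * b - 2 * c - d) = 3 + 5 * t"
  proof -
    have "2 * (- 4 * a - 3 * b - 2 * c - d) + 5 * Q = 2 * (5 * int n + 4)"
      using assms(1) unfolding w NN_def prod.case Q_def .
    then show ?thesis unfolding t_def by (simp add: algebra_simps)
  qed
  have "(2 * (1 + a - b - c + d)) mod 5 = 2" using assms(2) unfolding w Cr_def by simp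
  then have h2: "2 * (1 + a - b - c + d) = 2 + 5 * s" unfolding s_def by (metis div_mult_mod_eq add.commute mult.commute)
  have h1': "2 * (- 4 * a - 3 * b - 2 * c - d) - 3 - 5 * t = 0" using h1 by simp
  have h2': "2 * (1 + a - b - c + d) - 2 - 5 * s = 0" using h2 by simp
  have "2 * a + b + 2 * c + 1 = 5 * ((4 * a + 5 * b + 4 * c + 2) + 3 * t + 3 * s) + 3 * (2 * (- 4 * a - 3 * b - 2 * c - d) - 3 - 5 * t) + 3 * (2 * (1 + a - b - c + d) - 2 - 5 * s)"
    by (simp add: algebra_simps)
  then have x0: "2 * a + b + 2 * c + 1 = 5 * ((4 * a + 5 * b + 4 * c + 2) + 3 * t + 3 * s)" by (simp only: h1' h2' mult_zero_right mult_zero_left add_0_right)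
  define y0 where "y0 = (2 * a + b + 2 * c + 1) div 5"
  have y0: "5 * y0 = 2 * a + b + 2 * c + 1" unfolding y0_def x0 by simp
  have "- 2 * a - 2 * b - d + 2 = 5 * ((2 * b + 2 * c - d + 1) + 1 * t + 3 * s) + 1 * (2 * (- 4 * a - 3 * b - 2 * c - d) - 3 - 5 * t) + 3 * (2 * (1 + a - b - c + d) - 2 - 5 * s)"
    by (simp add: algebra_simps)
  then have x1: "- 2 * a - 2 * b - d + 2 = 5 * ((2 * b + 2 * c - d + 1) + 1 * t + 3 * s)" by (simp only: h1' h2' mult_zero_right mult_zero_left add_0_right)
  define y1 where "y1 = (- 2 * a - 2 * b - d + 2) div 5"
  have y1: "5 * y1 = - 2 * a - 2 * b - d + 2" unfolding y1_def x1 by simp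
  have "a - b - c + d = 5 * ((- a + b + c - d) + 0 * t + 3 * s) + 0 * (2 * (- 4 * a - 3 * b - 2 * c - d) - 3 - 5 * t) + 3 * (2 * (1 + a - b - c + d) - 2 - 5 * s)"
    by (simp add: algebra_simps)
  then have x2: "a - b - c + d = 5 * ((- a + b + c - d) + 0 * t + 3 * s)" by (simp only: h1' h2' mult_zero_right mult_zero_left add_0_right)
  define y2 where "y2 = (a - b - c + d) div 5"
  have y2: "5 * y2 = a - b - c + d" unfolding y2_def x2 by simp
  have "2 * b + c + 2 * d - 1 = 5 * ((2 * a + 4 * b + 3 * c + 1) + 2 * t + 3 * s) + 2 * (2 * (- 4 * a - 3 * b - 2 * c - d) - 3 - 5 * t) + 3 * (2 * (1 + a - b - c + d) - 2 - 5 * s)"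
    by (simp add: algebra_simps)
  then have x3: "2 * b + c + 2 * d - 1 = 5 * ((2 * a + 4 * b + 3 * c + 1) + 2 * t + 3 * s)" by (simp only: h1' h2' mult_zero_right mult_zero_left add_0_right)
  define y3 where "y3 = (2 * b + c + 2 * d - 1) div 5"
  have y3: "5 * y3 = 2 * b + c + 2 * d - 1" unfolding y3_def x3 by simp
  have pw: "psi2 w = (y0, y1, y2, y3)" unfolding w psi2_def prod.case y0_def y1_def y2_def y3_def ..
  have "5 * (y0 - y1 + y2 - y3) = (1) * (5 * y0) + (-1) * (5 * y1) + (1) * (5 * y2) + (-1) * (5 * y3) + 5 * (0)" by (simp add: algebra_simps)
  also have "\<dots> = (1) * (2 * a + b + 2 * c + 1) + (-1) * (- 2 * a - 2 * b - d + 2) + (1) * (a - b - c + d) + (-1) * (2 * b + c + 2 * d - 1) + 5 * (0)" by (simp only: y0 y1 y2 y3)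
  also have "\<dots> = 5 * a" by (simp add: algebra_simps)
  finally have f0: "y0 - y1 + y2 - y3 = a" by simp
  have "5 * (- y0 - 2 * y1 - 2 * y2 + 1) = (-1) * (5 * y0) + (-2) * (5 * y1) + (-2) * (5 * y2) + (0) * (5 * y3) + 5 * (1)" by (simp add: algebra_simps)
  also have "\<dots> = (-1) * (2 * a + b + 2 * c + 1) + (-2) * (- 2 * a - 2 * b - d + 2) + (-2) * (a - b - c + d) + (0) * (2 * b + c + 2 * d - 1) + 5 * (1)" by (simp only: y0 y1 y2 y3)
  also have "\<dots> = 5 * b" by (simp add: algebra_simps)
  finally have f1: "- y0 - 2 * y1 - 2 * y2 + 1 = b" by simp
  have "5 * (2 * y0 + 2 * y1 + y3 - 1) = (2) * (5 * y0) + (2) * (5 * y1) + (0) * (5 * y2) + (1) * (5 * y3) + 5 * (-1)" by (simp add: algebra_simps)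
  also have "\<dots> = (2) * (2 * a + b + 2 * c + 1) + (2) * (- 2 * a - 2 * b - d + 2) + (0) * (a - b - c + d) + (1) * (2 * b + c + 2 * d - 1) + 5 * (-1)" by (simp only: y0 y1 y2 y3)
  also have "\<dots> = 5 * c" by (simp add: algebra_simps)
  finally have f2: "2 * y0 + 2 * y1 + y3 - 1 = c" by simp
  have "5 * (y1 + 2 * y2 + 2 * y3) = (0) * (5 * y0) + (1) * (5 * y1) + (2) * (5 * y2) + (2) * (5 * y3) + 5 * (0)" by (simp add: algebra_simps)
  also have "\<dots> = (0) * (2 * a + b + 2 * c + 1) + (1) * (- 2 * a - 2 * b - d + 2) + (2) * (a - b - c + d) + (2) * (2 * b + c + 2 * d - 1) + 5 * (0)" by (simp only: y0 y1 y2 y3)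
  also have "\<dots> = 5 * d" by (simp add: algebra_simps)
  finally have f3: "y1 + 2 * y2 + 2 * y3 = d" by simp
  have py: "phi2 (y0, y1, y2, y3) = (a, b, c, d)" unfolding phi2_def prod.case
    using f0 f1 f2 f3 by simp
  show ?thesis using pw py w by simp
qed

lemma bij_phi2:
  "bij_betw phi2 {v. NN v = 2 * int n \<and> (int n - SRx v) mod 4 = i}
     {v. NN v = 2 * (5 * int n + 4) \<and> (5 * int n + 4 - SRx v) mod 4 = i \<and> Cr v = 2}"
proof (rule bij_betw_byWitness[where f'=psi2])
  show "\<forall>v\<in>{v. NN v = 2 * int n \<and> (int n - SRx v) mod 4 = i}. psi2 (phi2 v) = v"
    using psi_phi2 by blast
  show "\<forall>w\<in>{v. NN v = 2 * (5 * int n + 4) \<and> (5 * int n + 4 - SRx v) mod 4 = i \<and> Cr v = 2}. phi2 (psi2 w) = w"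
    using phi_psi2 by blast
  show "phi2 ` {v. NN v = 2 * int n \<and> (int n - SRx v) mod 4 = i}
    \<subseteq> {v. NN v = 2 * (5 * int n + 4) \<and> (5 * int n + 4 - SRx v) mod 4 = i \<and> Cr v = 2}"
  proof
    fix w assume "w \<in> phi2 ` {v. NN v = 2 * int n \<and> (int n - SRx v) mod 4 = i}"
    then obtain v where v: "w = phi2 v" "NN v = 2 * int n" "(int n - SRx v) mod 4 = i" by auto
    have "(5 * int n + 4 - SRx v) mod 4 = (int n - SRx v + 4 * (int n + 1)) mod 4" by (simp add: algebra_simps)
    also have "\<dots> = i" using v(3) by (metis mod_mult_self2)
    finally show "w \<in> {v. NN v = 2 * (5 * int n + 4) \<and> (5 * int n + 4 - SRx v) mod 4 = i \<and> Cr v = 2}"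
      using v NN_phi2[of v] SRx_phi2[of v] Cr_phi2[of v] by simp
  qed
  show "psi2 ` {v. NN v = 2 * (5 * int n + 4) \<and> (5 * int n + 4 - SRx v) mod 4 = i \<and> Cr v = 2}
    \<subseteq> {v. NN v = 2 * int n \<and> (int n - SRx v) mod 4 = i}"
  proof
    fix v assume "v \<in> psi2 ` {v. NN v = 2 * (5 * int n + 4) \<and> (5 * int n + 4 - SRx v) mod 4 = i \<and> Cr v = 2}"
    then obtain w where w: "v = psi2 w" "NN w = 2 * (5 * int n + 4)" "(5 * int n + 4 - SRx w) mod 4 = i" "Cr w = 2" by auto
    have pw: "phi2 v = w" using phi_psi2[OF w(2) w(4)] w(1) by simp
    have "NN v = 2 * int n" using NN_phi2[of v] pw w(2) by simp
    moreover have "SRx v = SRx w" using SRx_phi2[of v] pw by simp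
    moreover have "(int n - SRx w) mod 4 = i"
    proof -
      have "(int n - SRx w) mod 4 = (5 * int n + 4 - SRx w + 4 * (- int n - 1)) mod 4" by (simp add: algebra_simps)
      also have "\<dots> = i" using w(3) by (metis mod_mult_self2)
      finally show ?thesis .
    qed
    ultimately show "v \<in> {v. NN v = 2 * int n \<and> (int n - SRx v) mod 4 = i}" by simp
  qed
qed

lemma NN_phi3: "NN (phi3 v) = 5 * NN v + 8"
proof -
  obtain a b c d where v: "v = (a, b, c, d)" by (rule v4_cases)
  show ?thesis unfolding v NN_def phi3_def prod.case by (simp add: algebra_simps)
qed

lemma Cr_phi3: "Cr (phi3 v) = 3"
proof -
  obtain a b c d where v: "v = (a, b, c, d)" by (rule v4_cases)
  have h: "2 * (1 + (2 * a + c + 2 * d) - (2 * b + 2 * c + d) - (- 2 * a - b - 2 * c + 1) + (a + b - c - d - 1)) = 3 + (2 * a - 1) * 5" by (simp add: algebra_simps)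
  have "(2 * (1 + (2 * a + c + 2 * d) - (2 * b + 2 * c + d) - (- 2 * a - b - 2 * c + 1) + (a + b - c - d - 1))) mod 5 = 3" unfolding h mod_mult_self1 by simp
  then show ?thesis unfolding v Cr_def phi3_def prod.case .
qed

lemma bits_phi3: "bits (phi3 v) = bits v"
proof -
  obtain a b c d where v: "v = (a, b, c, d)" by (rule v4_cases)
  show ?thesis unfolding v bits_def phi3_def prod.case
    by (cases "even a"; cases "even b"; cases "even c"; cases "even d"; simp)
qed

lemma SRx_phi3: "SRx (phi3 v) = SRx v"
  using SRx_bits[of "phi3 v"] SRx_bits[of v] bits_phi3[of v] by simp

lemma psi_phi3: "psi3 (phi3 v) = v"
proof -
  obtain a b c d where v: "v = (a, b, c, d)" by (rule v4_cases)
  show ?thesis unfolding v psi3_def phi3_def prod.case by (simp add: algebra_simps)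
qed

lemma phi_psi3:
  assumes "NN w = 2 * (5 * int n + 4)" "Cr w = 3"
  shows "phi3 (psi3 w) = w"
proof -
  obtain a b c d where w: "w = (a, b, c, d)" by (rule v4_cases)
  define Q where "Q = a * (a - 1) + b * (b - 1) + c * (c - 1) + d * (d - 1) + (a + b + c + d) * (a + b + c + d + 1)"
  define t where "t = 2 * int n + 1 - Q"
  define s where "s = (2 * (1 + a - b - c + d)) div 5"
  have h1: "2 * (- 4 * a - 3 * b - 2 * c - d) = 3 + 5 * t"
  proof -
    have "2 * (- 4 * a - 3 * b - 2 * c - d) + 5 * Q = 2 * (5 * int n + 4)"
      using assms(1) unfolding w NN_def prod.case Q_def .
    then show ?thesis unfolding t_def by (simp add: algebra_simps)
  qed
  have "(2 * (1 + a - b - c + d)) mod 5 = 3" using assms(2) unfolding w Cr_def by simp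
  then have h2: "2 * (1 + a - b - c + d) = 3 + 5 * s" unfolding s_def by (metis div_mult_mod_eq add.commute mult.commute)
  have h1': "2 * (- 4 * a - 3 * b - 2 * c - d) - 3 - 5 * t = 0" using h1 by simp
  have h2': "2 * (1 + a - b - c + d) - 3 - 5 * s = 0" using h2 by simp
  have "a - b - c + d + 2 = 5 * ((- a + b + c - d + 1) + 0 * t + 3 * s) + 0 * (2 * (- 4 * a - 3 * b - 2 * c - d) - 3 - 5 * t) + 3 * (2 * (1 + a - b - c + d) - 3 - 5 * s)"
    by (simp add: algebra_simps)
  then have x0: "a - b - c + d + 2 = 5 * ((- a + b + c - d + 1) + 0 * t + 3 * s)" by (simp only: h1' h2' mult_zero_right mult_zero_left add_0_right)
  define y0 where "y0 = (a - b - c + d + 2) div 5"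
  have y0: "5 * y0 = a - b - c + d + 2" unfolding y0_def x0 by simp
  have "2 * b + c + 2 * d + 1 = 5 * ((2 * a + 4 * b + 3 * c + 2) + 2 * t + 3 * s) + 2 * (2 * (- 4 * a - 3 * b - 2 * c - d) - 3 - 5 * t) + 3 * (2 * (1 + a - b - c + d) - 3 - 5 * s)"
    by (simp add: algebra_simps)
  then have x1: "2 * b + c + 2 * d + 1 = 5 * ((2 * a + 4 * b + 3 * c + 2) + 2 * t + 3 * s)" by (simp only: h1' h2' mult_zero_right mult_zero_left add_0_right)
  define y1 where "y1 = (2 * b + c + 2 * d + 1) div 5"
  have y1: "5 * y1 = 2 * b + c + 2 * d + 1" unfolding y1_def x1 by simp
  have "- a - 2 * c - 2 * d = 5 * ((5 * a + 6 * b + 4 * c + 3) + 4 * t + 3 * s) + 4 * (2 * (- 4 * a - 3 * b - 2 * c - d) - 3 - 5 * t) + 3 * (2 * (1 + a - b - c + d) - 3 - 5 * s)"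
    by (simp add: algebra_simps)
  then have x2: "- a - 2 * c - 2 * d = 5 * ((5 * a + 6 * b + 4 * c + 3) + 4 * t + 3 * s)" by (simp only: h1' h2' mult_zero_right mult_zero_left add_0_right)
  define y2 where "y2 = (- a - 2 * c - 2 * d) div 5"
  have y2: "5 * y2 = - a - 2 * c - 2 * d" unfolding y2_def x2 by simp
  have "2 * a + b + 2 * c - 2 = 5 * ((4 * a + 5 * b + 4 * c + 2) + 3 * t + 3 * s) + 3 * (2 * (- 4 * a - 3 * b - 2 * c - d) - 3 - 5 * t) + 3 * (2 * (1 + a - b - c + d) - 3 - 5 * s)"
    by (simp add: algebra_simps)
  then have x3: "2 * a + b + 2 * c - 2 = 5 * ((4 * a + 5 * b + 4 * c + 2) + 3 * t + 3 * s)" by (simp only: h1' h2' mult_zero_right mult_zero_left add_0_right)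
  define y3 where "y3 = (2 * a + b + 2 * c - 2) div 5"
  have y3: "5 * y3 = 2 * a + b + 2 * c - 2" unfolding y3_def x3 by simp
  have pw: "psi3 w = (y0, y1, y2, y3)" unfolding w psi3_def prod.case y0_def y1_def y2_def y3_def ..
  have "5 * (2 * y0 + y2 + 2 * y3) = (2) * (5 * y0) + (0) * (5 * y1) + (1) * (5 * y2) + (2) * (5 * y3) + 5 * (0)" by (simp add: algebra_simps)
  also have "\<dots> = (2) * (a - b - c + d + 2) + (0) * (2 * b + c + 2 * d + 1) + (1) * (- a - 2 * c - 2 * d) + (2) * (2 * a + b + 2 * c - 2) + 5 * (0)" by (simp only: y0 y1 y2 y3)
  also have "\<dots> = 5 * a" by (simp add: algebra_simps)
  finally have f0: "2 * y0 + y2 + 2 * y3 = a" by simp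
  have "5 * (2 * y1 + 2 * y2 + y3) = (0) * (5 * y0) + (2) * (5 * y1) + (2) * (5 * y2) + (1) * (5 * y3) + 5 * (0)" by (simp add: algebra_simps)
  also have "\<dots> = (0) * (a - b - c + d + 2) + (2) * (2 * b + c + 2 * d + 1) + (2) * (- a - 2 * c - 2 * d) + (1) * (2 * a + b + 2 * c - 2) + 5 * (0)" by (simp only: y0 y1 y2 y3)
  also have "\<dots> = 5 * b" by (simp add: algebra_simps)
  finally have f1: "2 * y1 + 2 * y2 + y3 = b" by simp
  have "5 * (- 2 * y0 - y1 - 2 * y2 + 1) = (-2) * (5 * y0) + (-1) * (5 * y1) + (-2) * (5 * y2) + (0) * (5 * y3) + 5 * (1)" by (simp add: algebra_simps)
  also have "\<dots> = (-2) * (a - b - c + d + 2) + (-1) * (2 * b + c + 2 * d + 1) + (-2) * (- a - 2 * c - 2 * d) + (0) * (2 * a + b + 2 * c - 2) + 5 * (1)" by (simp only: y0 y1 y2 y3)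
  also have "\<dots> = 5 * c" by (simp add: algebra_simps)
  finally have f2: "- 2 * y0 - y1 - 2 * y2 + 1 = c" by simp
  have "5 * (y0 + y1 - y2 - y3 - 1) = (1) * (5 * y0) + (1) * (5 * y1) + (-1) * (5 * y2) + (-1) * (5 * y3) + 5 * (-1)" by (simp add: algebra_simps)
  also have "\<dots> = (1) * (a - b - c + d + 2) + (1) * (2 * b + c + 2 * d + 1) + (-1) * (- a - 2 * c - 2 * d) + (-1) * (2 * a + b + 2 * c - 2) + 5 * (-1)" by (simp only: y0 y1 y2 y3)
  also have "\<dots> = 5 * d" by (simp add: algebra_simps)
  finally have f3: "y0 + y1 - y2 - y3 - 1 = d" by simp
  have py: "phi3 (y0, y1, y2, y3) = (a, b, c, d)" unfolding phi3_def prod.case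
    using f0 f1 f2 f3 by simp
  show ?thesis using pw py w by simp
qed

lemma bij_phi3:
  "bij_betw phi3 {v. NN v = 2 * int n \<and> (int n - SRx v) mod 4 = i}
     {v. NN v = 2 * (5 * int n + 4) \<and> (5 * int n + 4 - SRx v) mod 4 = i \<and> Cr v = 3}"
proof (rule bij_betw_byWitness[where f'=psi3])
  show "\<forall>v\<in>{v. NN v = 2 * int n \<and> (int n - SRx v) mod 4 = i}. psi3 (phi3 v) = v"
    using psi_phi3 by blast
  show "\<forall>w\<in>{v. NN v = 2 * (5 * int n + 4) \<and> (5 * int n + 4 - SRx v) mod 4 = i \<and> Cr v = 3}. phi3 (psi3 w) = w"
    using phi_psi3 by blast
  show "phi3 ` {v. NN v = 2 * int n \<and> (int n - SRx v) mod 4 = i}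
    \<subseteq> {v. NN v = 2 * (5 * int n + 4) \<and> (5 * int n + 4 - SRx v) mod 4 = i \<and> Cr v = 3}"
  proof
    fix w assume "w \<in> phi3 ` {v. NN v = 2 * int n \<and> (int n - SRx v) mod 4 = i}"
    then obtain v where v: "w = phi3 v" "NN v = 2 * int n" "(int n - SRx v) mod 4 = i" by auto
    have "(5 * int n + 4 - SRx v) mod 4 = (int n - SRx v + 4 * (int n + 1)) mod 4" by (simp add: algebra_simps)
    also have "\<dots> = i" using v(3) by (metis mod_mult_self2)
    finally show "w \<in> {v. NN v = 2 * (5 * int n + 4) \<and> (5 * int n + 4 - SRx v) mod 4 = i \<and> Cr v = 3}"
      using v NN_phi3[of v] SRx_phi3[of v] Cr_phi3[of v] by simp
  qed
  show "psi3 ` {v. NN v = 2 * (5 * int n + 4) \<and> (5 * int n + 4 - SRx v) mod 4 = i \<and> Cr v = 3}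
    \<subseteq> {v. NN v = 2 * int n \<and> (int n - SRx v) mod 4 = i}"
  proof
    fix v assume "v \<in> psi3 ` {v. NN v = 2 * (5 * int n + 4) \<and> (5 * int n + 4 - SRx v) mod 4 = i \<and> Cr v = 3}"
    then obtain w where w: "v = psi3 w" "NN w = 2 * (5 * int n + 4)" "(5 * int n + 4 - SRx w) mod 4 = i" "Cr w = 3" by auto
    have pw: "phi3 v = w" using phi_psi3[OF w(2) w(4)] w(1) by simp
    have "NN v = 2 * int n" using NN_phi3[of v] pw w(2) by simp
    moreover have "SRx v = SRx w" using SRx_phi3[of v] pw by simp
    moreover have "(int n - SRx w) mod 4 = i"
    proof -
      have "(int n - SRx w) mod 4 = (5 * int n + 4 - SRx w + 4 * (- int n - 1)) mod 4" by (simp add: algebra_simps)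
      also have "\<dots> = i" using w(3) by (metis mod_mult_self2)
      finally show ?thesis .
    qed
    ultimately show "v \<in> {v. NN v = 2 * int n \<and> (int n - SRx v) mod 4 = i}" by simp
  qed
qed

lemma NN_phi4: "NN (phi4 v) = 5 * NN v + 8"
proof -
  obtain a b c d where v: "v = (a, b, c, d)" by (rule v4_cases)
  show ?thesis unfolding v NN_def phi4_def prod.case by (simp add: algebra_simps)
qed

lemma Cr_phi4: "Cr (phi4 v) = 4"
proof -
  obtain a b c d where v: "v = (a, b, c, d)" by (rule v4_cases)
  have h: "2 * (1 + (a + 2 * b + 2 * d) - (- b - 2 * c - 2 * d) - (- a + b + c - d) + (- 2 * a - 2 * b - c + 1)) = 4 + (2 * d) * 5" by (simp add: algebra_simps)
  have "(2 * (1 + (a + 2 * b + 2 * d) - (- b - 2 * c - 2 * d) - (- a + b + c - d) + (- 2 * a - 2 * b - c + 1))) mod 5 = 4" unfolding h mod_mult_self1 by simp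
  then show ?thesis unfolding v Cr_def phi4_def prod.case .
qed

lemma bits_phi4: "bits (phi4 v) = bits v"
proof -
  obtain a b c d where v: "v = (a, b, c, d)" by (rule v4_cases)
  show ?thesis unfolding v bits_def phi4_def prod.case
    by (cases "even a"; cases "even b"; cases "even c"; cases "even d"; simp)
qed

lemma SRx_phi4: "SRx (phi4 v) = SRx v"
  using SRx_bits[of "phi4 v"] SRx_bits[of v] bits_phi4[of v] by simp

lemma psi_phi4: "psi4 (phi4 v) = v"
proof -
  obtain a b c d where v: "v = (a, b, c, d)" by (rule v4_cases)
  show ?thesis unfolding v psi4_def phi4_def prod.case by (simp add: algebra_simps)
qed

lemma phi_psi4:
  assumes "NN w = 2 * (5 * int n + 4)" "Cr w = 4"
  shows "phi4 (psi4 w) = w"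
proof -
  obtain a b c d where w: "w = (a, b, c, d)" by (rule v4_cases)
  define Q where "Q = a * (a - 1) + b * (b - 1) + c * (c - 1) + d * (d - 1) + (a + b + c + d) * (a + b + c + d + 1)"
  define t where "t = 2 * int n + 1 - Q"
  define s where "s = (2 * (1 + a - b - c + d)) div 5"
  have h1: "2 * (- 4 * a - 3 * b - 2 * c - d) = 3 + 5 * t"
  proof -
    have "2 * (- 4 * a - 3 * b - 2 * c - d) + 5 * Q = 2 * (5 * int n + 4)"
      using assms(1) unfolding w NN_def prod.case Q_def .
    then show ?thesis unfolding t_def by (simp add: algebra_simps)
  qed
  have "(2 * (1 + a - b - c + d)) mod 5 = 4" using assms(2) unfolding w Cr_def by simp
  then have h2: "2 * (1 + a - b - c + d) = 4 + 5 * s" unfolding s_def by (metis div_mult_mod_eq add.commute mult.commute)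
  have h1': "2 * (- 4 * a - 3 * b - 2 * c - d) - 3 - 5 * t = 0" using h1 by simp
  have h2': "2 * (1 + a - b - c + d) - 4 - 5 * s = 0" using h2 by simp
  have "- a - 2 * c - 2 * d + 2 = 5 * ((5 * a + 6 * b + 4 * c + 4) + 4 * t + 3 * s) + 4 * (2 * (- 4 * a - 3 * b - 2 * c - d) - 3 - 5 * t) + 3 * (2 * (1 + a - b - c + d) - 4 - 5 * s)"
    by (simp add: algebra_simps)
  then have x0: "- a - 2 * c - 2 * d + 2 = 5 * ((5 * a + 6 * b + 4 * c + 4) + 4 * t + 3 * s)" by (simp only: h1' h2' mult_zero_right mult_zero_left add_0_right)
  define y0 where "y0 = (- a - 2 * c - 2 * d + 2) div 5"
  have y0: "5 * y0 = - a - 2 * c - 2 * d + 2" unfolding y0_def x0 by simp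
  have "2 * a + b + 2 * c = 5 * ((4 * a + 5 * b + 4 * c + 3) + 3 * t + 3 * s) + 3 * (2 * (- 4 * a - 3 * b - 2 * c - d) - 3 - 5 * t) + 3 * (2 * (1 + a - b - c + d) - 4 - 5 * s)"
    by (simp add: algebra_simps)
  then have x1: "2 * a + b + 2 * c = 5 * ((4 * a + 5 * b + 4 * c + 3) + 3 * t + 3 * s)" by (simp only: h1' h2' mult_zero_right mult_zero_left add_0_right)
  define y1 where "y1 = (2 * a + b + 2 * c) div 5"
  have y1: "5 * y1 = 2 * a + b + 2 * c" unfolding y1_def x1 by simp
  have "- 2 * a - 2 * b - d + 1 = 5 * ((2 * b + 2 * c - d + 2) + 1 * t + 3 * s) + 1 * (2 * (- 4 * a - 3 * b - 2 * c - d) - 3 - 5 * t) + 3 * (2 * (1 + a - b - c + d) - 4 - 5 * s)"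
    by (simp add: algebra_simps)
  then have x2: "- 2 * a - 2 * b - d + 1 = 5 * ((2 * b + 2 * c - d + 2) + 1 * t + 3 * s)" by (simp only: h1' h2' mult_zero_right mult_zero_left add_0_right)
  define y2 where "y2 = (- 2 * a - 2 * b - d + 1) div 5"
  have y2: "5 * y2 = - 2 * a - 2 * b - d + 1" unfolding y2_def x2 by simp
  have "a - b - c + d - 1 = 5 * ((- a + b + c - d + 1) + 0 * t + 3 * s) + 0 * (2 * (- 4 * a - 3 * b - 2 * c - d) - 3 - 5 * t) + 3 * (2 * (1 + a - b - c + d) - 4 - 5 * s)"
    by (simp add: algebra_simps)
  then have x3: "a - b - c + d - 1 = 5 * ((- a + b + c - d + 1) + 0 * t + 3 * s)" by (simp only: h1' h2' mult_zero_right mult_zero_left add_0_right)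
  define y3 where "y3 = (a - b - c + d - 1) div 5"
  have y3: "5 * y3 = a - b - c + d - 1" unfolding y3_def x3 by simp
  have pw: "psi4 w = (y0, y1, y2, y3)" unfolding w psi4_def prod.case y0_def y1_def y2_def y3_def ..
  have "5 * (y0 + 2 * y1 + 2 * y3) = (1) * (5 * y0) + (2) * (5 * y1) + (0) * (5 * y2) + (2) * (5 * y3) + 5 * (0)" by (simp add: algebra_simps)
  also have "\<dots> = (1) * (- a - 2 * c - 2 * d + 2) + (2) * (2 * a + b + 2 * c) + (0) * (- 2 * a - 2 * b - d + 1) + (2) * (a - b - c + d - 1) + 5 * (0)" by (simp only: y0 y1 y2 y3)
  also have "\<dots> = 5 * a" by (simp add: algebra_simps)
  finally have f0: "y0 + 2 * y1 + 2 * y3 = a" by simp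
  have "5 * (- y1 - 2 * y2 - 2 * y3) = (0) * (5 * y0) + (-1) * (5 * y1) + (-2) * (5 * y2) + (-2) * (5 * y3) + 5 * (0)" by (simp add: algebra_simps)
  also have "\<dots> = (0) * (- a - 2 * c - 2 * d + 2) + (-1) * (2 * a + b + 2 * c) + (-2) * (- 2 * a - 2 * b - d + 1) + (-2) * (a - b - c + d - 1) + 5 * (0)" by (simp only: y0 y1 y2 y3)
  also have "\<dots> = 5 * b" by (simp add: algebra_simps)
  finally have f1: "- y1 - 2 * y2 - 2 * y3 = b" by simp
  have "5 * (- y0 + y1 + y2 - y3) = (-1) * (5 * y0) + (1) * (5 * y1) + (1) * (5 * y2) + (-1) * (5 * y3) + 5 * (0)" by (simp add: algebra_simps)
  also have "\<dots> = (-1) * (- a - 2 * c - 2 * d + 2) + (1) * (2 * a + b + 2 * c) + (1) * (- 2 * a - 2 * b - d + 1) + (-1) * (a - b - c + d - 1) + 5 * (0)" by (simp only: y0 y1 y2 y3)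
  also have "\<dots> = 5 * c" by (simp add: algebra_simps)
  finally have f2: "- y0 + y1 + y2 - y3 = c" by simp
  have "5 * (- 2 * y0 - 2 * y1 - y2 + 1) = (-2) * (5 * y0) + (-2) * (5 * y1) + (-1) * (5 * y2) + (0) * (5 * y3) + 5 * (1)" by (simp add: algebra_simps)
  also have "\<dots> = (-2) * (- a - 2 * c - 2 * d + 2) + (-2) * (2 * a + b + 2 * c) + (-1) * (- 2 * a - 2 * b - d + 1) + (0) * (a - b - c + d - 1) + 5 * (1)" by (simp only: y0 y1 y2 y3)
  also have "\<dots> = 5 * d" by (simp add: algebra_simps)
  finally have f3: "- 2 * y0 - 2 * y1 - y2 + 1 = d" by simp
  have py: "phi4 (y0, y1, y2, y3) = (a, b, c, d)" unfolding phi4_def prod.case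
    using f0 f1 f2 f3 by simp
  show ?thesis using pw py w by simp
qed

lemma bij_phi4:
  "bij_betw phi4 {v. NN v = 2 * int n \<and> (int n - SRx v) mod 4 = i}
     {v. NN v = 2 * (5 * int n + 4) \<and> (5 * int n + 4 - SRx v) mod 4 = i \<and> Cr v = 4}"
proof (rule bij_betw_byWitness[where f'=psi4])
  show "\<forall>v\<in>{v. NN v = 2 * int n \<and> (int n - SRx v) mod 4 = i}. psi4 (phi4 v) = v"
    using psi_phi4 by blast
  show "\<forall>w\<in>{v. NN v = 2 * (5 * int n + 4) \<and> (5 * int n + 4 - SRx v) mod 4 = i \<and> Cr v = 4}. phi4 (psi4 w) = w"
    using phi_psi4 by blast
  show "phi4 ` {v. NN v = 2 * int n \<and> (int n - SRx v) mod 4 = i}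
    \<subseteq> {v. NN v = 2 * (5 * int n + 4) \<and> (5 * int n + 4 - SRx v) mod 4 = i \<and> Cr v = 4}"
  proof
    fix w assume "w \<in> phi4 ` {v. NN v = 2 * int n \<and> (int n - SRx v) mod 4 = i}"
    then obtain v where v: "w = phi4 v" "NN v = 2 * int n" "(int n - SRx v) mod 4 = i" by auto
    have "(5 * int n + 4 - SRx v) mod 4 = (int n - SRx v + 4 * (int n + 1)) mod 4" by (simp add: algebra_simps)
    also have "\<dots> = i" using v(3) by (metis mod_mult_self2)
    finally show "w \<in> {v. NN v = 2 * (5 * int n + 4) \<and> (5 * int n + 4 - SRx v) mod 4 = i \<and> Cr v = 4}"
      using v NN_phi4[of v] SRx_phi4[of v] Cr_phi4[of v] by simp
  qed
  show "psi4 ` {v. NN v = 2 * (5 * int n + 4) \<and> (5 * int n + 4 - SRx v) mod 4 = i \<and> Cr v = 4}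
    \<subseteq> {v. NN v = 2 * int n \<and> (int n - SRx v) mod 4 = i}"
  proof
    fix v assume "v \<in> psi4 ` {v. NN v = 2 * (5 * int n + 4) \<and> (5 * int n + 4 - SRx v) mod 4 = i \<and> Cr v = 4}"
    then obtain w where w: "v = psi4 w" "NN w = 2 * (5 * int n + 4)" "(5 * int n + 4 - SRx w) mod 4 = i" "Cr w = 4" by auto
    have pw: "phi4 v = w" using phi_psi4[OF w(2) w(4)] w(1) by simp
    have "NN v = 2 * int n" using NN_phi4[of v] pw w(2) by simp
    moreover have "SRx v = SRx w" using SRx_phi4[of v] pw by simp
    moreover have "(int n - SRx w) mod 4 = i"
    proof -
      have "(int n - SRx w) mod 4 = (5 * int n + 4 - SRx w + 4 * (- int n - 1)) mod 4" by (simp add: algebra_simps)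
      also have "\<dots> = i" using w(3) by (metis mod_mult_self2)
      finally show ?thesis .
    qed
    ultimately show "v \<in> {v. NN v = 2 * int n \<and> (int n - SRx v) mod 4 = i}" by simp
  qed
qed

definition cv :: "nat list \<Rightarrow> v4" where
  "cv la = (nvec la 0, nvec la 1, nvec la 2, nvec la 3)"

definition cfun :: "v4 \<Rightarrow> nat \<Rightarrow> int" where
  "cfun v r = (case v of (a, b, c, d) \<Rightarrow> if r = 0 then a else if r = 1 then b else if r = 2 then c
      else if r = 3 then d else - (a + b + c + d))"

lemma runner_cong:
  assumes "runner la c" "\<And>r. r < 5 \<Longrightarrow> c' r = c r"
  shows "runner la c'"
proof -
  have "nat (y mod 5) < 5" for y :: int by simp
  then show ?thesis using assms unfolding runner_def by metis
qed

lemma ev_half: "2 * (x * (x - 1) div 2) = x * (x - 1)" for x :: int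
proof -
  have "even (x * (x - 1))" by simp
  then show ?thesis by simp
qed

lemma core_facts:
  assumes core: "is_5core la"
  shows "runner la (cfun (cv la))" "2 * int (sum_list la) = NN (cv la)"
    "srank la mod 4 = (int (sum_list la) - SRx (cv la)) mod 4"
proof -
  have la: "is_partition la" using core unfolding is_5core_def by simp
  obtain c where run: "runner la c" using core_runner[OF core] by blast
  have nv: "nvec la r = c r" if "r < 5" for r using runner_nvec[OF la run that] .
  have s0: "c 0 + c 1 + c 2 + c 3 + c 4 = 0" using runner_sum_c[OF la run] by (simp add: sum5)
  have c4: "c 4 = - (c 0 + c 1 + c 2 + c 3)" using s0 by simp
  have cv: "cv la = (c 0, c 1, c 2, c 3)" unfolding cv_def using nv by simp
  have cf: "cfun (cv la) r = c r" if "r < 5" for r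
  proof -
    have "r = 0 \<or> r = 1 \<or> r = 2 \<or> r = 3 \<or> r = 4" using that by auto
    then show ?thesis unfolding cv cfun_def using c4 by auto
  qed
  show "runner la (cfun (cv la))" by (rule runner_cong[OF run cf])
  have "2 * int (sum_list la) = 2 * (\<Sum>r<5. int r * c r + 5 * (c r * (c r - 1) div 2))"
    using runner_size[OF la run] by simp
  also have "\<dots> = (\<Sum>r<5. 2 * int r * c r + 5 * (c r * (c r - 1)))"
    unfolding sum_distrib_left
  proof (rule sum.cong)
    fix r :: nat
    have e: "2 * (c r * (c r - 1) div 2) = c r * (c r - 1)" by (rule ev_half)
    have "2 * (int r * c r + 5 * (c r * (c r - 1) div 2)) = 2 * int r * c r + 5 * (2 * (c r * (c r - 1) div 2))"
      by algebra
    then show "2 * (int r * c r + 5 * (c r * (c r - 1) div 2)) = 2 * int r * c r + 5 * (c r * (c r - 1))"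
      unfolding e .
  qed simp
  also have "\<dots> = NN (cv la)"
    unfolding cv NN_def prod.case sum5 c4 by (simp add: algebra_simps)
  finally show "2 * int (sum_list la) = NN (cv la)" .
  have "srank la mod 4 = (int (sum_list la) - (\<Sum>r<5. (c r + (if even r then 1 else 0)) div 2)) mod 4"
    by (rule runner_srank[OF la run])
  also have "(\<Sum>r<5. (c r + (if even r then 1 else 0)) div 2) = SRx (cv la)"
    unfolding cv SRx_def prod.case sum5 c4 by (simp add: algebra_simps)
  finally show "srank la mod 4 = (int (sum_list la) - SRx (cv la)) mod 4" .
qed

lemma crank_cv: "crank5 la = Cr (cv la)"
  unfolding crank5_def Cr_def cv_def by simp

lemma xx_eq_imp:
  assumes "is_partition la" "is_partition la'" "\<And>a. xx la a = xx la' a"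
  shows "la = la'"
proof -
  have pp: "pp la a = pp la' a" for a using assms(3)[of a] unfolding xx_def by simp
  have len: "length la = length la'"
  proof (rule ccontr)
    assume "length la \<noteq> length la'"
    then consider "length la < length la'" | "length la' < length la" by linarith
    then show False
    proof cases
      case 1
      then have "pp la' (length la) > 0" using part_pos[OF assms(2)] by simp
      moreover have "pp la (length la) = 0" unfolding pp_def by simp
      ultimately show False using pp by simp
    next
      case 2
      then have "pp la (length la') > 0" using part_pos[OF assms(1)] by simp
      moreover have "pp la' (length la') = 0" unfolding pp_def by simp
      ultimately show False using pp by simp
    qed
  qed
  show ?thesis
  proof (rule nth_equalityI)
    show "length la = length la'" by (rule len)
    fix a assume "a < length la"
    then show "la ! a = la' ! a" using pp[of a] len unfolding pp_def by simp
  qed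
qed

lemma strict_dec_range_eq:
  fixes f g :: "nat \<Rightarrow> int"
  assumes f: "\<And>i j. i < j \<Longrightarrow> f j < f i" and g: "\<And>i j. i < j \<Longrightarrow> g j < g i"
    and R: "range f = range g"
  shows "f a = g a"
proof -
  have cntf: "card {y \<in> range f. y > f a} = a"
    if f: "\<And>i j. i < j \<Longrightarrow> f j < f i" for f :: "nat \<Rightarrow> int" and a
  proof -
    have "{y \<in> range f. y > f a} = f ` {..<a}"
    proof
      show "{y \<in> range f. y > f a} \<subseteq> f ` {..<a}"
      proof
        fix y assume "y \<in> {y \<in> range f. y > f a}"
        then obtain b where "y = f b" "f b > f a" by auto
        moreover have "b < a" using \<open>f b > f a\<close> f[of a b] by (metis linorder_neqE_nat order_less_asym)
        ultimately show "y \<in> f ` {..<a}" by auto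
      qed
      show "f ` {..<a} \<subseteq> {y \<in> range f. y > f a}" using f by auto
    qed
    moreover have "inj_on f {..<a}" using f by (metis inj_onI linorder_neqE_nat order_less_irrefl)
    ultimately show ?thesis by (simp add: card_image)
  qed
  have finf: "finite {y \<in> range f. y > t}" if tin: "t \<in> range f" for t
  proof -
    obtain b where "t = f b" using tin by auto
    then have "{y \<in> range f. y > t} = f ` {..<b}"
    proof -
      have "{y \<in> range f. y > f b} \<subseteq> f ` {..<b}"
      proof
        fix y assume "y \<in> {y \<in> range f. y > f b}"
        then obtain c where "y = f c" "f c > f b" by auto
        moreover have "c < b" using \<open>f c > f b\<close> f[of b c] by (metis linorder_neqE_nat order_less_asym)
        ultimately show "y \<in> f ` {..<b}" by auto
      qed
      moreover have "f ` {..<b} \<subseteq> {y \<in> range f. y > f b}" using f by auto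
      ultimately show ?thesis using \<open>t = f b\<close> by blast
    qed
    then show ?thesis by simp
  qed
  have ca: "card {y \<in> range f. y > f a} = a" by (rule cntf[OF f])
  have cb: "card {y \<in> range f. y > g a} = a" using cntf[of g a, OF g] R by simp
  have gin: "g a \<in> range f" using R by auto
  have fin: "f a \<in> range f" by auto
  show ?thesis
  proof (rule ccontr)
    assume "f a \<noteq> g a"
    then consider "f a < g a" | "g a < f a" by linarith
    then show False
    proof cases
      case 1
      have "{y \<in> range f. y > g a} \<subset> {y \<in> range f. y > f a}" using 1 gin by auto
      then have "card {y \<in> range f. y > g a} < card {y \<in> range f. y > f a}"
        using finf[OF fin] by (rule psubset_card_mono[rotated])
      then show False using ca cb by simp
    next
      case 2
      have "{y \<in> range f. y > f a} \<subset> {y \<in> range f. y > g a}" using 2 gin by auto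
      then have "card {y \<in> range f. y > f a} < card {y \<in> range f. y > g a}"
        using finf[OF gin] by (rule psubset_card_mono[rotated])
      then show False using ca cb by simp
    qed
  qed
qed

lemma cv_inj: "inj_on cv {la. is_5core la}"
proof (rule inj_onI)
  fix la la' assume a: "la \<in> {la. is_5core la}" "la' \<in> {la. is_5core la}" "cv la = cv la'"
  have p: "is_partition la" "is_partition la'" using a unfolding is_5core_def by auto
  have r1: "runner la (cfun (cv la))" using core_facts(1)[of la] a(1) by blast
  have "runner la' (cfun (cv la'))" using core_facts(1)[of la'] a(2) by blast
  then have r2: "runner la' (cfun (cv la))" using a(3) by metis
  have R: "range (xx la) = range (xx la')" using r1 r2 unfolding runner_def by blast
  have "xx la x = xx la' x" for x
    by (rule strict_dec_range_eq[OF xx_strict[OF p(1)] xx_strict[OF p(2)] R])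
  then show "la = la'" using xx_eq_imp[OF p] by blast
qed

lemma cv_surj: "\<exists>la. is_5core la \<and> cv la = v"
proof -
  obtain a b c d where v: "v = (a, b, c, d)" by (rule v4_cases)
  have "(\<Sum>r<5. cfun v r) = 0" unfolding sum5 v cfun_def by simp
  then obtain la where la: "is_partition la" and run: "runner la (cfun v)" using runner_exists by blast
  have core: "is_5core la" using runner_core[OF la run] .
  have "nvec la r = cfun v r" if "r < 5" for r using runner_nvec[OF la run that] .
  then have "cv la = v" unfolding cv_def v cfun_def by simp
  then show ?thesis using core by blast
qed

lemma img_A:
  "cv ` {la \<in> cores5 N. srank la mod 4 = i} = {v. NN v = 2 * int N \<and> (int N - SRx v) mod 4 = i}"
proof
  show "cv ` {la \<in> cores5 N. srank la mod 4 = i} \<subseteq> {v. NN v = 2 * int N \<and> (int N - SRx v) mod 4 = i}"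
  proof
    fix v assume "v \<in> cv ` {la \<in> cores5 N. srank la mod 4 = i}"
    then obtain la where la: "is_5core la" "sum_list la = N" "srank la mod 4 = i" "v = cv la"
      unfolding cores5_def by blast
    have "NN v = 2 * int N" using core_facts(2)[OF la(1)] la(2,4) by simp
    moreover have "(int N - SRx v) mod 4 = i" using core_facts(3)[OF la(1)] la(2,3,4) by simp
    ultimately show "v \<in> {v. NN v = 2 * int N \<and> (int N - SRx v) mod 4 = i}" by blast
  qed
next
  show "{v. NN v = 2 * int N \<and> (int N - SRx v) mod 4 = i} \<subseteq> cv ` {la \<in> cores5 N. srank la mod 4 = i}"
  proof
    fix v assume h: "v \<in> {v. NN v = 2 * int N \<and> (int N - SRx v) mod 4 = i}"
    obtain la where la: "is_5core la" "cv la = v" using cv_surj by blast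
    have "sum_list la = N" using core_facts(2)[OF la(1)] la(2) h by simp
    moreover have "srank la mod 4 = i" using core_facts(3)[OF la(1)] la(2) h \<open>sum_list la = N\<close> by simp
    ultimately have "la \<in> {la \<in> cores5 N. srank la mod 4 = i}" using la unfolding cores5_def by blast
    then show "v \<in> cv ` {la \<in> cores5 N. srank la mod 4 = i}" using la(2) by blast
  qed
qed

lemma img_B:
  "cv ` {la \<in> cores5 N. srank la mod 4 = i \<and> crank5 la = j} = {v. NN v = 2 * int N \<and> (int N - SRx v) mod 4 = i \<and> Cr v = j}"
proof
  show "cv ` {la \<in> cores5 N. srank la mod 4 = i \<and> crank5 la = j} \<subseteq> {v. NN v = 2 * int N \<and> (int N - SRx v) mod 4 = i \<and> Cr v = j}"
  proof
    fix v assume "v \<in> cv ` {la \<in> cores5 N. srank la mod 4 = i \<and> crank5 la = j}"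
    then obtain la where la: "is_5core la" "sum_list la = N" "srank la mod 4 = i" "crank5 la = j" "v = cv la"
      unfolding cores5_def by blast
    have "NN v = 2 * int N" using core_facts(2)[OF la(1)] la(2,5) by simp
    moreover have "(int N - SRx v) mod 4 = i" using core_facts(3)[OF la(1)] la(2,3,5) by simp
    moreover have "Cr v = j" using crank_cv[of la] la(4,5) by simp
    ultimately show "v \<in> {v. NN v = 2 * int N \<and> (int N - SRx v) mod 4 = i \<and> Cr v = j}" by blast
  qed
next
  show "{v. NN v = 2 * int N \<and> (int N - SRx v) mod 4 = i \<and> Cr v = j} \<subseteq> cv ` {la \<in> cores5 N. srank la mod 4 = i \<and> crank5 la = j}"
  proof
    fix v assume h: "v \<in> {v. NN v = 2 * int N \<and> (int N - SRx v) mod 4 = i \<and> Cr v = j}"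
    obtain la where la: "is_5core la" "cv la = v" using cv_surj by blast
    have "sum_list la = N" using core_facts(2)[OF la(1)] la(2) h by simp
    moreover have "srank la mod 4 = i" using core_facts(3)[OF la(1)] la(2) h \<open>sum_list la = N\<close> by simp
    moreover have "crank5 la = j" using crank_cv[of la] la(2) h by simp
    ultimately have "la \<in> {la \<in> cores5 N. srank la mod 4 = i \<and> crank5 la = j}" using la unfolding cores5_def by blast
    then show "v \<in> cv ` {la \<in> cores5 N. srank la mod 4 = i \<and> crank5 la = j}" using la(2) by blast
  qed
qed

lemma card_A: "card {la \<in> cores5 N. srank la mod 4 = i} = card {v. NN v = 2 * int N \<and> (int N - SRx v) mod 4 = i}"
proof -
  have "inj_on cv {la \<in> cores5 N. srank la mod 4 = i}"
    by (rule inj_on_subset[OF cv_inj]) (auto simp: cores5_def)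
  then have c: "card (cv ` {la \<in> cores5 N. srank la mod 4 = i}) = card {la \<in> cores5 N. srank la mod 4 = i}"
    by (rule card_image)
  show ?thesis using c unfolding img_A[of N i] by (rule sym)
qed

lemma card_B: "card {la \<in> cores5 N. srank la mod 4 = i \<and> crank5 la = j} = card {v. NN v = 2 * int N \<and> (int N - SRx v) mod 4 = i \<and> Cr v = j}"
proof -
  have "inj_on cv {la \<in> cores5 N. srank la mod 4 = i \<and> crank5 la = j}"
    by (rule inj_on_subset[OF cv_inj]) (auto simp: cores5_def)
  then have c: "card (cv ` {la \<in> cores5 N. srank la mod 4 = i \<and> crank5 la = j}) = card {la \<in> cores5 N. srank la mod 4 = i \<and> crank5 la = j}"
    by (rule card_image)
  show ?thesis using c unfolding img_B[of N i j] by (rule sym)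
qed

lemma a5j_eq:
  assumes "j \<in> {0..4}"
  shows "a5j j i (5 * n + 4) = a5 i n"
proof -
  have N: "int (5 * n + 4) = 5 * int n + 4" by simp
  have "a5j j i (5 * n + 4) = card {v. NN v = 2 * (5 * int n + 4) \<and> (5 * int n + 4 - SRx v) mod 4 = i \<and> Cr v = j}"
    unfolding a5j_def card_B N ..
  also have "\<dots> = card {v. NN v = 2 * int n \<and> (int n - SRx v) mod 4 = i}"
  proof -
    have "j = 0 \<or> j = 1 \<or> j = 2 \<or> j = 3 \<or> j = 4" using assms by auto
    then show ?thesis
    proof (elim disjE)
      assume "j = 0" then show ?thesis using bij_betw_same_card[OF bij_phi0[of n i]] by simp
    next
      assume "j = 1" then show ?thesis using bij_betw_same_card[OF bij_phi1[of n i]] by simp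
    next
      assume "j = 2" then show ?thesis using bij_betw_same_card[OF bij_phi2[of n i]] by simp
    next
      assume "j = 3" then show ?thesis using bij_betw_same_card[OF bij_phi3[of n i]] by simp
    next
      assume "j = 4" then show ?thesis using bij_betw_same_card[OF bij_phi4[of n i]] by simp
    qed
  qed
  also have "\<dots> = a5 i n" unfolding a5_def card_A ..
  finally show ?thesis .
qed

lemma len_le_sum: "0 \<notin> set xs \<Longrightarrow> length xs \<le> sum_list (xs :: nat list)"
  by (induction xs) auto

lemma finite_cores5: "finite (cores5 N)"
proof -
  have "cores5 N \<subseteq> {xs. set xs \<subseteq> {..N} \<and> length xs \<le> N}"
  proof
    fix la assume "la \<in> cores5 N"
    then have "is_partition la" "sum_list la = N" unfolding cores5_def is_5core_def by auto
    then show "la \<in> {xs. set xs \<subseteq> {..N} \<and> length xs \<le> N}"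
      using len_le_sum[of la] member_le_sum_list[of _ la] unfolding is_partition_def by auto
  qed
  then show ?thesis by (rule finite_subset) (rule finite_lists_length_le, simp)
qed

lemma a5_eq: "a5 i (5 * n + 4) = 5 * a5 i n"
proof -
  define B where "B j = {la \<in> cores5 (5 * n + 4). srank la mod 4 = i \<and> crank5 la = j}" for j
  have U: "{la \<in> cores5 (5 * n + 4). srank la mod 4 = i} = (\<Union>j\<in>{0..4}. B j)"
  proof
    show "{la \<in> cores5 (5 * n + 4). srank la mod 4 = i} \<subseteq> (\<Union>j\<in>{0..4}. B j)"
    proof
      fix la assume "la \<in> {la \<in> cores5 (5 * n + 4). srank la mod 4 = i}"
      moreover have "crank5 la \<in> {0..4}" unfolding crank5_def by auto
      ultimately show "la \<in> (\<Union>j\<in>{0..4}. B j)" unfolding B_def by auto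
    qed
    show "(\<Union>j\<in>{0..4}. B j) \<subseteq> {la \<in> cores5 (5 * n + 4). srank la mod 4 = i}" unfolding B_def by auto
  qed
  have "a5 i (5 * n + 4) = card (\<Union>j\<in>{0..4}. B j)" unfolding a5_def U ..
  also have "\<dots> = (\<Sum>j\<in>{0..4}. card (B j))"
    by (rule card_UN_disjoint) (auto simp: B_def intro: finite_subset[OF _ finite_cores5])
  also have "\<dots> = (\<Sum>j\<in>{0..(4::int)}. a5 i n)"
  proof (rule sum.cong)
    fix j :: int assume "j \<in> {0..4}"
    then show "card (B j) = a5 i n" using a5j_eq[of j i n] unfolding a5j_def B_def by simp
  qed simp
  also have "\<dots> = 5 * a5 i n" by simp
  finally show ?thesis .
qed

theorem mainTheorem12:
  fixes i j :: int and n :: nat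
  assumes "i \<in> {0, 2}" and "j \<in> {0..4}"
  shows "real (a5j j i (5 * n + 4)) = real (a5 i (5 * n + 4)) / 5
     \<and> a5j 0 i (5 * n + 4) = a5 i n
     \<and> a5 i (5 * n + 4) = 5 * a5 i n"
  using a5j_eq[OF assms(2)] a5j_eq[of 0] a5_eq by simp

end
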